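(* Let $\alpha,\beta$ satisfy $0<\alpha\le\lambda_{\min}(\Sigma)$ and $\lambda_{\max}(\Sigma)\le\beta$, and let $\lambda>0$. Let $(\eta_k)_{k\ge0}$ be learning rates with $\eta\le\eta_k<1/\beta$ for some $\eta>0$, define $\gamma_k$ by $1-\lambda\gamma_k=\gamma_k/\eta_k$ (i.e. $\gamma_k=\eta_k/(1+\lambda\eta_k)$), and set $\gamma:=\eta/(1+\lambda\eta)$. Run the SGD paths $(w_k)$ (learning rates $\eta_k$, for $L$) and $(\hat w_k)$ (learning rates $\gamma_k$, for $L+\lambda R$) described in the context. Define the weighting scheme $P_k:=1-\prod_{i=0}^k(\gamma_i/\eta_i)$, $p_0:=P_0$, $p_k:=P_k-P_{k-1}$ ($k\ge1$), and the averaged iterates $\tilde w_k:=P_k^{-1}\sum_{i=0}^k p_iw_i$. Then: 1. For all $k\ge0$: $P_k\,\mathbb E[\tilde w_k]=\mathbb E[\hat w_k]-(1-P_k)\,\mathbb E[w_k]$. 2. Both $\mathbb E[w_k]$ and $\mathbb E[\hat w_k]$ converge (to $\Sigma^{-1}a$ and $(\Sigma+\lambda I)^{-1}a$ respectively), and there is a constant $C$ such that $\|\mathbb E[\hat w_k]-\mathbb E[\tilde w_k]\|_2\le C(1-\lambda\gamma)^k$ for all $k$. 3. Suppose the gradient noise $\epsilon_k:=(\Sigma w_k-a)-(x_{\xi_{k+1}}x_{\xi_{k+1}}^\top w_k-x_{\xi_{k+1}}y_{\xi_{k+1}})$ satisfies $\mathbb E[\|\epsilon_k\|_2^2]\le\sigma^2$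 for all $k$. Then for every $\delta\in(0,1)$ and all sufficiently large $k$, with probability at least $1-\delta$, $$\|P_k\tilde w_k-P_k\mathbb E[\tilde w_k]\|_2\le \frac{\sigma}{\gamma(\lambda+\alpha)(\lambda+\beta)^2}\sqrt{\frac{\lambda}{\delta\gamma(2-\lambda\gamma)}}.$$
   Context: Data $(x_i,y_i)\in\mathbb R^d\times\mathbb R$, $i=1,\dots,n$. Loss $L(w)=\frac1{2n}\sum_{i=1}^n(w^\top x_i-y_i)^2$, regularizer $R(w)=\frac12\|w\|_2^2$. Write $\Sigma=\frac1n\sum_i x_ix_i^\top$ and $a=\frac1n\sum_i x_iy_i$, so $\nabla L(w)=\Sigma w-a$; $L$ is $\alpha$-strongly convex and $\beta$-smooth under the stated conditions. Let $(\xi_k)_{k\ge1}$ be i.i.d. uniform on $\{1,\dots,n\}$. SGD paths (batch size 1, started at zero): $w_0=\hat w_0=0$, $w_{k+1}=w_k-\eta_k(x_{\xi_{k+1}}x_{\xi_{k+1}}^\top w_k-x_{\xi_{k+1}}y_{\xi_{k+1}})$, $\hat w_{k+1}=\hat w_k-\gamma_k(x_{\xi_{k+1}}x_{\xi_{k+1}}^\top \hat w_k-x_{\xi_{k+1}}y_{\xi_{k+1}}+\lambda\hat w_k)$. *)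

theory Defs
  imports "HOL-Probability.Probability"
begin

definition outer :: "real^'d \<Rightarrow> real^'d \<Rightarrow> real^'d^'d" where
  "outer u v = (\<chi> i j. u $ i * v $ j)"

definition data_Sigma :: "(nat \<Rightarrow> real^'d) \<Rightarrow> nat \<Rightarrow> real^'d^'d" where
  "data_Sigma x n = (1 / real n) *\<^sub>R (\<Sum>i<n. outer (x i) (x i))"

definition data_a :: "(nat \<Rightarrow> real^'d) \<Rightarrow> (nat \<Rightarrow> real) \<Rightarrow> nat \<Rightarrow> real^'d" where
  "data_a x y n = (1 / real n) *\<^sub>R (\<Sum>i<n. y i *\<^sub>R x i)"

definition eigenvalues :: "real^'d^'d \<Rightarrow> real set" where
  "eigenvalues A = {\<mu>. \<exists>v. v \<noteq> 0 \<and> A *v v = \<mu> *\<^sub>R v}"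

fun sgd_w :: "(nat \<Rightarrow> real^'d) \<Rightarrow> (nat \<Rightarrow> real) \<Rightarrow> (nat \<Rightarrow> real)
     \<Rightarrow> (nat \<Rightarrow> 'a \<Rightarrow> nat) \<Rightarrow> nat \<Rightarrow> 'a \<Rightarrow> real^'d" where
  "sgd_w x y eta \<xi> 0 \<omega> = 0"
| "sgd_w x y eta \<xi> (Suc k) \<omega> =
     (let v = sgd_w x y eta \<xi> k \<omega>; i = \<xi> (Suc k) \<omega>
      in v - eta k *\<^sub>R (outer (x i) (x i) *v v - y i *\<^sub>R x i))"

fun sgd_ridge :: "(nat \<Rightarrow> real^'d) \<Rightarrow> (nat \<Rightarrow> real) \<Rightarrow> real \<Rightarrow> (nat \<Rightarrow> real)
     \<Rightarrow> (nat \<Rightarrow> 'a \<Rightarrow> nat) \<Rightarrow> nat \<Rightarrow> 'a \<Rightarrow> real^'d" where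
  "sgd_ridge x y lam gam \<xi> 0 \<omega> = 0"
| "sgd_ridge x y lam gam \<xi> (Suc k) \<omega> =
     (let v = sgd_ridge x y lam gam \<xi> k \<omega>; i = \<xi> (Suc k) \<omega>
      in v - gam k *\<^sub>R (outer (x i) (x i) *v v - y i *\<^sub>R x i + lam *\<^sub>R v))"

definition wP :: "(nat \<Rightarrow> real) \<Rightarrow> (nat \<Rightarrow> real) \<Rightarrow> nat \<Rightarrow> real" where
  "wP gam eta k = 1 - (\<Prod>i\<le>k. gam i / eta i)"

definition wp :: "(nat \<Rightarrow> real) \<Rightarrow> (nat \<Rightarrow> real) \<Rightarrow> nat \<Rightarrow> real" where
  "wp gam eta k = (if k = 0 then wP gam eta 0 else wP gam eta k - wP gam eta (k - 1))"

definition avg_w :: "(nat \<Rightarrow> real) \<Rightarrow> (nat \<Rightarrow> real) \<Rightarrow> (nat \<Rightarrow> 'a \<Rightarrow> real^'d) \<Rightarrow> nat \<Rightarrow> 'a \<Rightarrow> real^'d" where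
  "avg_w gam eta w k \<omega> = (1 / wP gam eta k) *\<^sub>R (\<Sum>i\<le>k. wp gam eta i *\<^sub>R w i \<omega>)"

end

theory Submission
  imports Defs
begin


lemma outer_mult: "outer u v *v w = inner v w *\<^sub>R u"
  by (simp add: outer_def matrix_vector_mult_def inner_vec_def vec_eq_iff sum_distrib_left
      algebra_simps)

lemma sum_mat_mult: "(\<Sum>i\<in>I. (A i :: real^'n^'m)) *v v = (\<Sum>i\<in>I. A i *v v)"
  by (induct I rule: infinite_finite_induct) (auto simp: matrix_vector_mult_add_rdistrib)

lemma Sig_mult: "data_Sigma x n *v v = (1 / real n) *\<^sub>R (\<Sum>i<n. inner (x i) v *\<^sub>R x i)"
  unfolding data_Sigma_def
  by (simp add: scaleR_matrix_vector_assoc[symmetric] sum_mat_mult outer_mult)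

lemma Sig_sym: "inner (data_Sigma x n *v u) v = inner u (data_Sigma x n *v v)"
  unfolding Sig_mult by (simp add: inner_sum_left inner_sum_right inner_commute mult.commute)

lemma Sig_psd: "inner u (data_Sigma x n *v u) \<ge> 0"
  unfolding Sig_mult by (simp add: inner_sum_right inner_commute sum_nonneg)

lemma quad_nonpos_imp:
  fixes g K :: real
  assumes "\<forall>s. 2 * s * g + s\<^sup>2 * K \<le> 0"
  shows "g = 0"
proof (rule ccontr)
  assume g: "g \<noteq> 0"
  define s where "s = g / (\<bar>K\<bar> + 1)"
  have pos: "\<bar>K\<bar> + 1 > 0" by simp
  have "2 * s * g + s\<^sup>2 * K \<le> 0" using assms by simp
  moreover have "\<And>D. D > 0 \<Longrightarrow> 2 * (g / D) * g + (g / D)\<^sup>2 * K = g\<^sup>2 * (2 * D + K) / D\<^sup>2"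
    by (simp add: field_simps power2_eq_square)
  then have "2 * s * g + s\<^sup>2 * K = g\<^sup>2 * (2 * (\<bar>K\<bar> + 1) + K) / (\<bar>K\<bar> + 1)\<^sup>2"
    unfolding s_def using pos by blast
  moreover have "g\<^sup>2 > 0" using g by simp
  moreover have "2 * (\<bar>K\<bar> + 1) + K > 0" by (cases "K \<ge> 0") auto
  ultimately show False using pos by (metis divide_pos_pos mult_pos_pos not_le zero_less_power)
qed

lemma sym_op_bound:
  fixes B :: "real^'d \<Rightarrow> real^'d"
  assumes lin: "linear B" and sym: "\<And>u v. inner (B u) v = inner u (B v)"
    and eigb: "\<And>\<mu> z. z \<noteq> 0 \<Longrightarrow> B z = \<mu> *\<^sub>R z \<Longrightarrow> \<bar>\<mu>\<bar> \<le> c"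
  shows "norm (B v) \<le> c * norm v"
proof -
  have cont: "continuous_on (sphere (0::real^'d) 1) (\<lambda>u. norm (B u))"
    by (intro continuous_intros linear_continuous_on linear_conv_bounded_linear[THEN iffD1] lin)
  have ne: "sphere (0::real^'d) 1 \<noteq> {}" by simp
  obtain u where u: "u \<in> sphere 0 1" and umax: "\<And>y. y \<in> sphere 0 1 \<Longrightarrow> norm (B y) \<le> norm (B u)"
    using continuous_attains_sup[OF compact_sphere ne cont] by blast
  define M0 where "M0 = norm (B u)"
  have nu: "norm u = 1" using u by simp
  have hom: "norm (B w) \<le> M0 * norm w" for w
  proof (cases "w = 0")
    case True then show ?thesis using lin by (simp add: linear_0)
  next
    case False
    have "norm (B ((1 / norm w) *\<^sub>R w)) \<le> M0"
      unfolding M0_def using False by (intro umax) simp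
    then have "(1 / norm w) * norm (B w) \<le> M0"
      using lin by (simp add: linear_scale)
    then show ?thesis using False by (simp add: field_simps)
  qed
  have M0sq: "inner (B u) (B u) = M0\<^sup>2" unfolding M0_def by (simp add: power2_norm_eq_inner)
  have orth: "inner (B (B u) - M0\<^sup>2 *\<^sub>R u) h = 0" for h
  proof -
    define g where "g = inner (B u) (B h) - M0\<^sup>2 * inner u h"
    define K where "K = inner (B h) (B h) - M0\<^sup>2 * inner h h"
    have "\<forall>s. 2 * s * g + s\<^sup>2 * K \<le> 0"
    proof
      fix s :: real
      have "(norm (B (u + s *\<^sub>R h)))\<^sup>2 \<le> (M0 * norm (u + s *\<^sub>R h))\<^sup>2"
        using hom[of "u + s *\<^sub>R h"] by (intro power_mono) auto
      moreover have "(norm (B (u + s *\<^sub>R h)))\<^sup>2 = inner (B u) (B u) + 2 * s * inner (B u) (B h) + s\<^sup>2 * inner (B h) (B h)"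
        using lin unfolding power2_norm_eq_inner by (simp add: linear_add linear_scale inner_add_left inner_add_right
            inner_commute[of "B h" "B u"] power2_eq_square algebra_simps)
      moreover have "(M0 * norm (u + s *\<^sub>R h))\<^sup>2 = M0\<^sup>2 * (inner u u + 2 * s * inner u h + s\<^sup>2 * inner h h)"
        unfolding power_mult_distrib power2_norm_eq_inner by (simp add: inner_add_left inner_add_right
            inner_commute[of h u] power2_eq_square algebra_simps)
      moreover have "inner u u = 1" using nu by (simp add: power2_norm_eq_inner[symmetric])
      ultimately show "2 * s * g + s\<^sup>2 * K \<le> 0"
        unfolding g_def K_def using M0sq by (simp add: algebra_simps)
    qed
    then have "g = 0" by (rule quad_nonpos_imp)
    then show ?thesis unfolding g_def by (simp add: inner_diff_left sym)
  qed
  have BB: "B (B u) = M0\<^sup>2 *\<^sub>R u"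
    using orth[of "B (B u) - M0\<^sup>2 *\<^sub>R u"] by simp
  have "M0 \<le> c"
  proof (cases "B u + M0 *\<^sub>R u = 0")
    case True
    then have "B u = (- M0) *\<^sub>R u" by (simp add: eq_neg_iff_add_eq_0)
    moreover have "u \<noteq> 0" using nu by auto
    ultimately have "\<bar>- M0\<bar> \<le> c" by (rule eigb[rotated])
    then show ?thesis by simp
  next
    case False
    have "B (B u + M0 *\<^sub>R u) = M0 *\<^sub>R (B u + M0 *\<^sub>R u)"
      using lin BB by (simp add: linear_add linear_scale algebra_simps power2_eq_square)
    then have "\<bar>M0\<bar> \<le> c" by (rule eigb[OF False])
    then show ?thesis by simp
  qed
  moreover have "M0 \<ge> 0" unfolding M0_def by simp
  ultimately show ?thesis using hom[of v] by (meson mult_right_mono norm_ge_zero order_trans)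
qed

lemma eig_lb:
  assumes eig: "\<forall>\<mu>\<in>eigenvalues A. \<alpha> \<le> \<mu> \<and> \<mu> \<le> \<beta>"
    and "z \<noteq> 0" "A *v z = c *\<^sub>R z"
  shows "\<alpha> \<le> c \<and> c \<le> \<beta>"
  using assms unfolding eigenvalues_def by blast

lemma contr:
  assumes eig: "\<forall>\<mu>\<in>eigenvalues (data_Sigma x n). \<alpha> \<le> \<mu> \<and> \<mu> \<le> \<beta>"
    and t: "0 \<le> t" "t * \<beta> \<le> 1"
  shows "norm (v - t *\<^sub>R (data_Sigma x n *v v)) \<le> (1 - t * \<alpha>) * norm v"
proof -
  let ?S = "data_Sigma x n"
  have "norm ((\<lambda>v. v - t *\<^sub>R (?S *v v)) v) \<le> (1 - t * \<alpha>) * norm v"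
  proof (rule sym_op_bound)
    show "linear (\<lambda>v. v - t *\<^sub>R (?S *v v))"
      by (rule linearI) (simp_all add: algebra_simps)
  next
    fix u v :: "real^'a"
    show "inner (u - t *\<^sub>R (?S *v u)) v = inner u (v - t *\<^sub>R (?S *v v))"
      by (simp add: inner_diff_left inner_diff_right Sig_sym)
  next
    fix \<mu> and z :: "real^'a"
    assume z: "z \<noteq> 0" and Bz: "z - t *\<^sub>R (?S *v z) = \<mu> *\<^sub>R z"
    show "\<bar>\<mu>\<bar> \<le> 1 - t * \<alpha>"
    proof (cases "t = 0")
      case True
      then have "z = \<mu> *\<^sub>R z" using Bz by simp
      then have "(1 - \<mu>) *\<^sub>R z = 0" by (simp add: algebra_simps)
      then have "\<mu> = 1" using z by simp
      then show ?thesis using True by simp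
    next
      case False
      then have tp: "t > 0" using t by simp
      have "?S *v z = ((1 - \<mu>) / t) *\<^sub>R z"
      proof -
        have "t *\<^sub>R (?S *v z) = (1 - \<mu>) *\<^sub>R z" using Bz by (simp add: algebra_simps)
        then have "(1 / t) *\<^sub>R (t *\<^sub>R (?S *v z)) = (1 / t) *\<^sub>R ((1 - \<mu>) *\<^sub>R z)" by simp
        then show ?thesis using tp by simp
      qed
      then have "\<alpha> \<le> (1 - \<mu>) / t \<and> (1 - \<mu>) / t \<le> \<beta>" by (rule eig_lb[OF eig z])
      then have "t * \<alpha> \<le> 1 - \<mu> \<and> 1 - \<mu> \<le> t * \<beta>" using tp by (simp add: field_simps)
      then show ?thesis using t by (simp add: abs_if)
    qed
  qed
  then show ?thesis by simp
qed

lemma inv_apply: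
  fixes A :: "real^'n^'n"
  assumes "\<And>v. A *v v = 0 \<Longrightarrow> v = 0"
  shows "A *v (matrix_inv A *v b) = b"
proof -
  obtain B where B: "B ** A = mat 1" using matrix_left_invertible_ker[of A] assms by blast
  then have "A ** B = mat 1" using matrix_left_right_inverse by blast
  then have "A ** matrix_inv A = mat 1 \<and> matrix_inv A ** A = mat 1"
    unfolding matrix_inv_def using B by (rule someI[where x=B, OF conjI])
  then show ?thesis by (simp add: matrix_vector_mul_assoc)
qed



locale sgdm = prob_space M for M :: "'a measure" +
  fixes \<xi> :: "nat \<Rightarrow> 'a \<Rightarrow> nat" and n :: nat
  assumes n_pos: "n > 0"
    and indep: "indep_vars (\<lambda>_. count_space UNIV) \<xi> {1..}"
    and unif: "\<forall>k\<ge>1. \<forall>i<n. prob {\<omega> \<in> space M. \<xi> k \<omega> = i} = 1 / real n"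
begin

definition SS :: "nat \<Rightarrow> (nat \<Rightarrow> nat) set" where
  "SS k = PiE {1..k} (\<lambda>_. {..<n})"

definition Ev :: "nat \<Rightarrow> (nat \<Rightarrow> nat) \<Rightarrow> 'a set" where
  "Ev k s = {\<omega> \<in> space M. \<forall>i\<in>{1..k}. \<xi> i \<omega> = s i}"

lemma xi_meas: "i \<ge> 1 \<Longrightarrow> \<xi> i \<in> measurable M (count_space UNIV)"
  using indep unfolding indep_vars_def by auto

lemma xi_set: "i \<ge> 1 \<Longrightarrow> {\<omega> \<in> space M. \<xi> i \<omega> = j} \<in> sets M"
proof -
  assume "i \<ge> 1"
  then have "\<xi> i -` {j} \<inter> space M \<in> sets M"
    using xi_meas measurable_sets by (metis sets_count_space UNIV_I Pow_UNIV)
  moreover have "\<xi> i -` {j} \<inter> space M = {\<omega> \<in> space M. \<xi> i \<omega> = j}" by auto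
  ultimately show ?thesis by simp
qed

lemma Ev_sets: "Ev k s \<in> sets M"
proof (cases "k = 0")
  case True
  then show ?thesis unfolding Ev_def by simp
next
  case False
  show ?thesis unfolding Ev_def
    by (rule sets.sets_Collect_finite_All') (use False xi_set in auto)
qed

lemma Ev_Int: "Ev k s \<inter> space M = Ev k s"
  unfolding Ev_def by auto

lemma int_ind: "(\<integral>\<omega>. indicator (Ev k s) \<omega> *\<^sub>R (c::'b::{banach,second_countable_topology}) \<partial>M) = prob (Ev k s) *\<^sub>R c"
proof -
  have "integrable M (indicator (Ev k s) :: 'a \<Rightarrow> real)"
    using Ev_sets by (simp add: emeasure_eq_measure)
  then show ?thesis by (simp add: Ev_Int)
qed

lemma prob_Ev: assumes "s \<in> SS k" shows "prob (Ev k s) = (1 / real n) ^ k"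
proof (cases "k = 0")
  case True
  then show ?thesis unfolding Ev_def by (simp add: prob_space)
next
  case False
  have ind: "indep_sets (\<lambda>i. { \<xi> i -` A \<inter> space M | A. A \<in> sets (count_space (UNIV::nat set))}) {1..}"
    using indep unfolding indep_vars_def2 by auto
  have "Ev k s = (\<Inter>i\<in>{1..k}. \<xi> i -` {s i} \<inter> space M)"
    using False unfolding Ev_def by auto
  then have "prob (Ev k s) = prob (\<Inter>i\<in>{1..k}. \<xi> i -` {s i} \<inter> space M)" by simp
  also have "\<dots> = (\<Prod>i\<in>{1..k}. prob (\<xi> i -` {s i} \<inter> space M))"
    using False by (intro indep_setsD[OF ind]) auto
  also have "\<dots> = (\<Prod>i\<in>{1..k}. 1 / real n)"
  proof (rule prod.cong)
    fix i assume i: "i \<in> {1..k}"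
    have "\<xi> i -` {s i} \<inter> space M = {\<omega> \<in> space M. \<xi> i \<omega> = s i}" by auto
    moreover have "s i < n" using assms i unfolding SS_def by auto
    ultimately show "prob (\<xi> i -` {s i} \<inter> space M) = 1 / real n"
      using unif i by auto
  qed simp
  finally show ?thesis by simp
qed

definition dep :: "nat \<Rightarrow> ((nat \<Rightarrow> nat) \<Rightarrow> 'b) \<Rightarrow> bool" where
  "dep k f \<longleftrightarrow> (\<forall>s t. (\<forall>i\<in>{1..k}. s i = t i) \<longrightarrow> f s = f t)"

definition Xi :: "'a \<Rightarrow> nat \<Rightarrow> nat" where "Xi \<omega> = (\<lambda>i. \<xi> i \<omega>)"

definition RX :: "nat \<Rightarrow> 'a \<Rightarrow> nat \<Rightarrow> nat" where
  "RX k \<omega> = restrict (\<lambda>i. \<xi> i \<omega>) {1..k}"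

lemma AE_lt: "AE \<omega> in M. \<forall>i\<in>{1..k}. \<xi> i \<omega> < n"
proof (rule AE_finite_allI)
  fix i assume i: "i \<in> {1..k}"
  have eq: "{\<omega> \<in> space M. \<xi> i \<omega> < n} = (\<Union>j\<in>{..<n}. {\<omega> \<in> space M. \<xi> i \<omega> = j})" by auto
  have "prob {\<omega> \<in> space M. \<xi> i \<omega> < n} = (\<Sum>j\<in>{..<n}. prob {\<omega> \<in> space M. \<xi> i \<omega> = j})"
    unfolding eq using i xi_set
    by (intro finite_measure_finite_Union) (auto simp: disjoint_family_on_def)
  also have "\<dots> = 1" using unif i n_pos by simp
  finally have "AE \<omega> in M. \<omega> \<in> {\<omega> \<in> space M. \<xi> i \<omega> < n}" by (rule AE_prob_1)
  then show "AE \<omega> in M. \<xi> i \<omega> < n" by auto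
qed simp

lemma RX_meas: "RX k \<in> measurable M (count_space (PiE {1..k} (\<lambda>_. UNIV)))"
proof (subst measurable_count_space_eq_countable)
  show "countable (PiE {1..k} (\<lambda>_. UNIV :: nat set))" by (intro countable_PiE) auto
  show "RX k \<in> space M \<rightarrow> PiE {1..k} (\<lambda>_. UNIV) \<and>
    (\<forall>a\<in>PiE {1..k} (\<lambda>_. UNIV). RX k -` {a} \<inter> space M \<in> sets M)"
  proof safe
    fix a :: "nat \<Rightarrow> nat" assume a: "a \<in> PiE {1..k} (\<lambda>_. UNIV)"
    have "RX k -` {a} \<inter> space M = Ev k a"
      using a unfolding RX_def Ev_def by (auto simp: PiE_def extensional_def restrict_def fun_eq_iff)
    then show "RX k -` {a} \<inter> space M \<in> sets M" using Ev_sets by simp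
  qed (auto simp: RX_def)
qed

lemma dep_RX: "dep k f \<Longrightarrow> f (Xi \<omega>) = f (RX k \<omega>)"
  unfolding dep_def Xi_def RX_def by auto

lemma meas_dep:
  fixes f :: "(nat \<Rightarrow> nat) \<Rightarrow> 'b::topological_space"
  assumes "dep k f" shows "(\<lambda>\<omega>. f (Xi \<omega>)) \<in> borel_measurable M"
proof -
  have "(\<lambda>\<omega>. f (RX k \<omega>)) \<in> borel_measurable M"
    by (rule measurable_compose[OF RX_meas]) simp
  then show ?thesis using dep_RX[OF assms] by simp
qed

lemma finite_SS: "finite (SS k)"
  unfolding SS_def by (intro finite_PiE) auto

lemma card_SS: "card (SS k) = n ^ k"
  unfolding SS_def by (subst card_PiE) auto

lemma AE_repr:
  fixes f :: "(nat \<Rightarrow> nat) \<Rightarrow> 'b::real_vector"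
  assumes "dep k f"
  shows "AE \<omega> in M. f (Xi \<omega>) = (\<Sum>s\<in>SS k. indicator (Ev k s) \<omega> *\<^sub>R f s)"
  using AE_lt[of k] AE_space
proof eventually_elim
  case (elim \<omega>)
  show ?case
  proof -
    have True: "\<omega> \<in> space M" using elim by simp
    have R: "RX k \<omega> \<in> SS k" using elim unfolding RX_def SS_def by auto
    have "(\<Sum>s\<in>SS k. indicator (Ev k s) \<omega> *\<^sub>R f s) = (\<Sum>s\<in>SS k. if s = RX k \<omega> then f s else 0)"
    proof (rule sum.cong)
      fix s assume s: "s \<in> SS k"
      have "\<omega> \<in> Ev k s \<longleftrightarrow> s = RX k \<omega>"
        using s True unfolding Ev_def RX_def SS_def
        by (auto simp: PiE_def extensional_def restrict_def fun_eq_iff)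
      then show "indicator (Ev k s) \<omega> *\<^sub>R f s = (if s = RX k \<omega> then f s else 0)"
        by (auto simp: indicator_def)
    qed simp
    also have "\<dots> = f (RX k \<omega>)" using R finite_SS by simp
    finally show ?thesis using dep_RX[OF assms] by simp
  qed
qed

lemma expect_dep:
  fixes f :: "(nat \<Rightarrow> nat) \<Rightarrow> 'b::{banach,second_countable_topology}"
  assumes "dep k f"
  shows "integrable M (\<lambda>\<omega>. f (Xi \<omega>))"
    and "(\<integral>\<omega>. f (Xi \<omega>) \<partial>M) = (1 / real n) ^ k *\<^sub>R (\<Sum>s\<in>SS k. f s)"
proof -
  have m2: "(\<lambda>\<omega>. \<Sum>s\<in>SS k. indicator (Ev k s) \<omega> *\<^sub>R f s) \<in> borel_measurable M"
    using Ev_sets by measurable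
  have int2: "integrable M (\<lambda>\<omega>. \<Sum>s\<in>SS k. indicator (Ev k s) \<omega> *\<^sub>R f s)"
    by (intro Bochner_Integration.integrable_sum integrable_indicator Ev_sets) (simp add: emeasure_eq_measure)
  show "integrable M (\<lambda>\<omega>. f (Xi \<omega>))"
    by (rule integrable_cong_AE_imp[OF int2 meas_dep[OF assms]])
       (use AE_repr[OF assms] in \<open>auto elim: AE_mp\<close>)
  have "(\<integral>\<omega>. f (Xi \<omega>) \<partial>M) = (\<integral>\<omega>. (\<Sum>s\<in>SS k. indicator (Ev k s) \<omega> *\<^sub>R f s) \<partial>M)"
    by (rule integral_cong_AE[OF meas_dep[OF assms] m2 AE_repr[OF assms]])
  also have "\<dots> = (\<Sum>s\<in>SS k. measure M (Ev k s) *\<^sub>R f s)"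
    by (subst Bochner_Integration.integral_sum)
       (auto intro!: integrable_indicator Ev_sets sum.cong simp: emeasure_eq_measure int_ind)
  also have "\<dots> = (\<Sum>s\<in>SS k. (1 / real n) ^ k *\<^sub>R f s)"
    by (intro sum.cong refl) (simp add: prob_Ev)
  finally show "(\<integral>\<omega>. f (Xi \<omega>) \<partial>M) = (1 / real n) ^ k *\<^sub>R (\<Sum>s\<in>SS k. f s)"
    by (simp add: scaleR_sum_right)
qed

lemma SS_Suc: "SS (Suc k) = (\<lambda>(j, g). g(Suc k := j)) ` ({..<n} \<times> SS k)"
proof -
  have "{1..Suc k} = insert (Suc k) {1..k}" by auto
  then show ?thesis unfolding SS_def by (simp add: PiE_insert_eq)
qed

lemma sum_SS_Suc:
  "(\<Sum>s\<in>SS (Suc k). F s) = (\<Sum>s\<in>SS k. \<Sum>j<n. F (s(Suc k := j)))"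
proof -
  have inj: "inj_on (\<lambda>(j, g). g(Suc k := j)) ({..<n} \<times> SS k)"
    unfolding SS_def by (rule inj_combinator) simp
  have "(\<Sum>s\<in>SS (Suc k). F s) = (\<Sum>(j, g)\<in>{..<n} \<times> SS k. F (g(Suc k := j)))"
    unfolding SS_Suc by (subst sum.reindex[OF inj]) (simp add: case_prod_beta)
  also have "\<dots> = (\<Sum>j<n. \<Sum>g\<in>SS k. F (g(Suc k := j)))"
    by (rule sum.cartesian_product[symmetric])
  also have "\<dots> = (\<Sum>g\<in>SS k. \<Sum>j<n. F (g(Suc k := j)))"
    by (rule sum.swap)
  finally show ?thesis .
qed

definition EE :: "nat \<Rightarrow> ((nat \<Rightarrow> nat) \<Rightarrow> 'b::real_vector) \<Rightarrow> 'b" where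
  "EE k f = (1 / real n) ^ k *\<^sub>R (\<Sum>s\<in>SS k. f s)"

lemma EE_int:
  fixes f :: "(nat \<Rightarrow> nat) \<Rightarrow> 'b::{banach,second_countable_topology}"
  assumes "dep k f"
  shows "(\<integral>\<omega>. f (Xi \<omega>) \<partial>M) = EE k f"
  using expect_dep(2)[OF assms] unfolding EE_def .

lemma dep_mono: "dep k f \<Longrightarrow> k \<le> k' \<Longrightarrow> dep k' f"
  unfolding dep_def by auto

lemma EE_tower:
  fixes f :: "(nat \<Rightarrow> nat) \<Rightarrow> 'b::{banach,second_countable_topology}"
  assumes "dep k f" "k \<le> k'"
  shows "EE k' f = EE k f"
  using EE_int[OF assms(1)] EE_int[OF dep_mono[OF assms]] by simp

lemma EE_step:
  "EE (Suc k) f = EE k (\<lambda>s. (1 / real n) *\<^sub>R (\<Sum>j<n. f (s(Suc k := j))))"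
  unfolding EE_def sum_SS_Suc by (simp add: scaleR_sum_right)

lemma EE_add: "EE k (\<lambda>s. f s + g s) = EE k f + EE k g"
  unfolding EE_def by (simp add: sum.distrib scaleR_add_right)

lemma EE_diff: "EE k (\<lambda>s. f s - g s) = EE k f - EE k g"
  unfolding EE_def by (simp add: sum_subtractf scaleR_diff_right)

lemma EE_scale: "EE k (\<lambda>s. c *\<^sub>R f s) = c *\<^sub>R EE k f"
  unfolding EE_def by (simp add: scaleR_sum_right mult.commute)

lemma EE_sum: "EE k (\<lambda>s. \<Sum>i\<in>I. f i s) = (\<Sum>i\<in>I. EE k (f i))"
  unfolding EE_def by (simp add: scaleR_sum_right sum.swap[of _ I])

lemma EE_lin:
  assumes "linear L" shows "EE k (\<lambda>s. L (f s)) = L (EE k f)"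
  unfolding EE_def using assms by (simp add: linear_sum linear_scale)

lemma EE_const: "EE k (\<lambda>s. c) = c"
  unfolding EE_def using n_pos by (simp add: card_SS power_one_over sum_constant_scaleR)

lemma EE_mono:
  fixes f g :: "(nat \<Rightarrow> nat) \<Rightarrow> real"
  assumes "\<And>s. s \<in> SS k \<Longrightarrow> f s \<le> g s" shows "EE k f \<le> EE k g"
  unfolding EE_def using assms by (auto intro!: mult_left_mono sum_mono)

lemma EE_measure:
  assumes "dep k Q"
  shows "measure M {\<omega> \<in> space M. Q (Xi \<omega>)} = EE k (\<lambda>s. if Q s then 1 else 0 :: real)"
proof -
  have d: "dep k (\<lambda>s. if Q s then 1 else 0 :: real)" using assms unfolding dep_def by metis
  have m: "(\<lambda>\<omega>. if Q (Xi \<omega>) then 1 else 0 :: real) \<in> borel_measurable M"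
    using meas_dep[OF d] by simp
  have A: "{\<omega> \<in> space M. Q (Xi \<omega>)} \<in> sets M"
  proof -
    have "{\<omega> \<in> space M. Q (Xi \<omega>)} = (\<lambda>\<omega>. if Q (Xi \<omega>) then 1 else 0 :: real) -` {1} \<inter> space M"
      by (auto split: if_splits)
    then show ?thesis using measurable_sets[OF m, of "{1}"] by simp
  qed
  have "measure M {\<omega> \<in> space M. Q (Xi \<omega>)} = (\<integral>\<omega>. indicator {\<omega> \<in> space M. Q (Xi \<omega>)} \<omega> \<partial>M)"
    using A by (simp add: Int_absorb2)
  also have "\<dots> = (\<integral>\<omega>. (if Q (Xi \<omega>) then 1 else 0 :: real) \<partial>M)"
    by (rule Bochner_Integration.integral_cong) (auto simp: indicator_def)
  also have "\<dots> = EE k (\<lambda>s. if Q s then 1 else 0 :: real)"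
    using EE_int[OF d] by simp
  finally show ?thesis .
qed

end


locale main = sgdm M \<xi> n for M :: "'a measure" and \<xi> n +
  fixes x :: "nat \<Rightarrow> real^'d" and y :: "nat \<Rightarrow> real"
    and \<alpha> \<beta> lam \<eta> :: real and eta :: "nat \<Rightarrow> real"
  assumes alpha_pos: "0 < \<alpha>"
    and eig: "\<forall>\<mu>\<in>eigenvalues (data_Sigma x n). \<alpha> \<le> \<mu> \<and> \<mu> \<le> \<beta>"
    and lam_pos: "lam > 0"
    and eta_pos: "\<eta> > 0"
    and eta_bnd: "\<forall>k. \<eta> \<le> eta k \<and> eta k < 1 / \<beta>"
begin

abbreviation "Sig \<equiv> data_Sigma x n"
abbreviation "aa \<equiv> data_a x y n"
definition "gam k = eta k / (1 + lam * eta k)"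
definition "rr k = 1 / (1 + lam * eta k)"

definition "W s k = sgd_w x y eta (\<lambda>i t. t i) k s"
definition "HW s k = sgd_ridge x y lam gam (\<lambda>i t. t i) k s"
definition "m k = EE k (\<lambda>s. W s k)"
definition "h k = EE k (\<lambda>s. HW s k)"

lemma beta_pos: "\<beta> > 0"
proof -
  have "0 < 1 / \<beta>" using eta_bnd[rule_format, of 0] eta_pos by linarith
  then show ?thesis by simp
qed

lemma etak_pos: "eta k > 0" using eta_bnd eta_pos by (meson less_le_trans)

lemma etak_beta: "eta k * \<beta> < 1"
  using eta_bnd beta_pos by (simp add: field_simps)

lemma w_eq: "sgd_w x y eta \<xi> k \<omega> = W (Xi \<omega>) k"
  unfolding W_def by (induct k) (simp_all add: Xi_def Let_def)

lemma hw_eq: "sgd_ridge x y lam gam \<xi> k \<omega> = HW (Xi \<omega>) k"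
  unfolding HW_def by (induct k) (simp_all add: Xi_def Let_def)

lemma dep_W: "dep k (\<lambda>s. W s k)"
  unfolding dep_def
proof (induct k)
  case 0 then show ?case by (simp add: W_def)
next
  case (Suc k)
  show ?case
  proof (intro allI impI)
    fix s t :: "nat \<Rightarrow> nat" assume st: "\<forall>i\<in>{1..Suc k}. s i = t i"
    then have "W s k = W t k" using Suc by auto
    moreover have "s (Suc k) = t (Suc k)" using st by auto
    ultimately show "W s (Suc k) = W t (Suc k)" by (simp add: W_def Let_def)
  qed
qed

lemma dep_HW: "dep k (\<lambda>s. HW s k)"
  unfolding dep_def
proof (induct k)
  case 0 then show ?case by (simp add: HW_def)
next
  case (Suc k)
  show ?case
  proof (intro allI impI)
    fix s t :: "nat \<Rightarrow> nat" assume st: "\<forall>i\<in>{1..Suc k}. s i = t i"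
    then have "HW s k = HW t k" using Suc by auto
    moreover have "s (Suc k) = t (Suc k)" using st by auto
    ultimately show "HW s (Suc k) = HW t (Suc k)" by (simp add: HW_def Let_def)
  qed
qed

lemma dep_upd: "dep k f \<Longrightarrow> f (s(Suc k := j)) = f s"
  unfolding dep_def by auto

lemma W_upd: "W (s(Suc k := j)) (Suc k) = W s k - eta k *\<^sub>R (outer (x j) (x j) *v W s k - y j *\<^sub>R x j)"
proof -
  have "W (s(Suc k := j)) k = W s k" using dep_upd[OF dep_W] .
  then show ?thesis by (simp add: W_def Let_def)
qed

lemma HW_upd: "HW (s(Suc k := j)) (Suc k) = HW s k - gam k *\<^sub>R (outer (x j) (x j) *v HW s k - y j *\<^sub>R x j + lam *\<^sub>R HW s k)"
proof -
  have "HW (s(Suc k := j)) k = HW s k" using dep_upd[OF dep_HW] .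
  then show ?thesis by (simp add: HW_def Let_def)
qed

lemma avg_outer: "(1 / real n) *\<^sub>R (\<Sum>j<n. outer (x j) (x j) *v v) = Sig *v v"
  unfolding data_Sigma_def by (simp add: scaleR_matrix_vector_assoc[symmetric] sum_mat_mult)

lemma avg_a: "(1 / real n) *\<^sub>R (\<Sum>j<n. y j *\<^sub>R x j) = aa"
  unfolding data_a_def ..

lemma avg_grad: "(1 / real n) *\<^sub>R (\<Sum>j<n. outer (x j) (x j) *v v - y j *\<^sub>R x j) = Sig *v v - aa"
  using avg_outer avg_a by (simp add: sum_subtractf scaleR_diff_right)

lemma avg_const: "(1 / real n) *\<^sub>R (\<Sum>j<n. (c::real^'d)) = c"
  using n_pos by (simp only: sum_constant_scaleR card_lessThan) simp

lemma avg_step: "(1 / real n) *\<^sub>R (\<Sum>j<n. (v::real^'d) - t *\<^sub>R G j) = v - t *\<^sub>R ((1 / real n) *\<^sub>R (\<Sum>j<n. G j))"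
proof -
  have "(\<Sum>j<n. v - t *\<^sub>R G j) = (\<Sum>j<n. v) - t *\<^sub>R (\<Sum>j<n. G j)"
    by (simp add: sum_subtractf scaleR_sum_right)
  then show ?thesis using avg_const[of v] by (simp add: scaleR_diff_right)
qed

lemma avg_plus: "(1 / real n) *\<^sub>R (\<Sum>j<n. G j + (v::real^'d)) = (1 / real n) *\<^sub>R (\<Sum>j<n. G j) + v"
  using avg_const[of v] by (simp add: sum.distrib scaleR_add_right)

lemma m_Suc: "m (Suc k) = m k - eta k *\<^sub>R (Sig *v m k - aa)"
proof -
  have "m (Suc k) = EE k (\<lambda>s. (1 / real n) *\<^sub>R (\<Sum>j<n. W (s(Suc k := j)) (Suc k)))"
    unfolding m_def by (rule EE_step)
  also have "\<dots> = EE k (\<lambda>s. W s k - eta k *\<^sub>R (Sig *v W s k - aa))"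
  proof -
    have "(1 / real n) *\<^sub>R (\<Sum>j<n. W (s(Suc k := j)) (Suc k)) = W s k - eta k *\<^sub>R (Sig *v W s k - aa)" for s
      unfolding W_upd avg_step avg_grad ..
    then show ?thesis by simp
  qed
  also have "\<dots> = m k - eta k *\<^sub>R (Sig *v m k - aa)"
    unfolding m_def EE_diff EE_scale EE_const
    by (simp add: EE_lin[OF matrix_vector_mul_linear])
  finally show ?thesis .
qed

lemma h_Suc: "h (Suc k) = h k - gam k *\<^sub>R (Sig *v h k - aa + lam *\<^sub>R h k)"
proof -
  have "h (Suc k) = EE k (\<lambda>s. (1 / real n) *\<^sub>R (\<Sum>j<n. HW (s(Suc k := j)) (Suc k)))"
    unfolding h_def by (rule EE_step)
  also have "\<dots> = EE k (\<lambda>s. HW s k - gam k *\<^sub>R (Sig *v HW s k - aa + lam *\<^sub>R HW s k))"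
  proof -
    have "(1 / real n) *\<^sub>R (\<Sum>j<n. HW (s(Suc k := j)) (Suc k)) = HW s k - gam k *\<^sub>R (Sig *v HW s k - aa + lam *\<^sub>R HW s k)" for s
      unfolding HW_upd avg_step avg_plus avg_grad ..
    then show ?thesis by simp
  qed
  also have "\<dots> = h k - gam k *\<^sub>R (Sig *v h k - aa + lam *\<^sub>R h k)"
    unfolding h_def EE_diff EE_scale EE_const EE_add
    by (simp add: EE_lin[OF matrix_vector_mul_linear])
  finally show ?thesis .
qed

lemma m0: "m 0 = 0" unfolding m_def EE_def W_def by simp
lemma h0: "h 0 = 0" unfolding h_def EE_def HW_def by simp

definition "Rm k = (\<Prod>i<k. rr i)"

lemma den_pos: "1 + lam * eta k > 0"
  using etak_pos[of k] lam_pos by (simp add: add_pos_pos)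

lemma rr_gam: "rr k = 1 - lam * gam k"
  unfolding rr_def gam_def using den_pos[of k] by (simp add: field_simps)

lemma gam_rr: "gam k = rr k * eta k"
  unfolding rr_def gam_def by simp

lemma gam_over_eta: "gam k / eta k = rr k"
  using etak_pos[of k] unfolding gam_rr by simp

lemma wP_eq: "wP gam eta k = 1 - Rm (Suc k)"
  unfolding wP_def Rm_def gam_over_eta lessThan_Suc_atMost ..

lemma wp_eq: "wp gam eta k = lam * gam k * Rm k"
proof (cases k)
  case 0 then show ?thesis unfolding wp_def wP_eq Rm_def by (simp add: rr_gam)
next
  case (Suc j)
  then show ?thesis unfolding wp_def wP_eq Rm_def by (simp add: rr_gam algebra_simps)
qed

definition "gg k = Sig *v m k - aa"

lemma gg_Suc: "gg (Suc k) = gg k - eta k *\<^sub>R (Sig *v gg k)"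
  unfolding gg_def m_Suc by (simp add: algebra_simps matrix_vector_mult_diff_distrib)

lemma lin_step: "Sig *v (X - t *\<^sub>R S) + lam *\<^sub>R (X - t *\<^sub>R S) - aa = (Sig *v X + lam *\<^sub>R X - aa) - t *\<^sub>R (Sig *v S) - (lam * t) *\<^sub>R S"
  by (simp add: algebra_simps matrix_vector_mult_diff_distrib)

definition "uu k = (\<Sum>i\<le>k. wp gam eta i *\<^sub>R m i) + Rm (Suc k) *\<^sub>R m k"

lemma uu_h: "uu k = h k \<and> Sig *v uu k + lam *\<^sub>R uu k - aa = Rm k *\<^sub>R gg k"
proof (induct k)
  case 0
  show ?case unfolding uu_def by (simp add: m0 h0 gg_def Rm_def)
next
  case (Suc k)
  have R: "Rm (Suc k) = Rm k * rr k" unfolding Rm_def by simp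
  have R2: "Rm (Suc (Suc k)) = Rm k * rr k * rr (Suc k)" unfolding Rm_def by simp
  have "uu (Suc k) = uu k + Rm (Suc k) *\<^sub>R (m (Suc k) - m k)"
    unfolding uu_def wp_eq R2 rr_gam[of "Suc k"] by (simp add: algebra_simps R)
  also have "\<dots> = uu k - gam k *\<^sub>R (Rm k *\<^sub>R gg k)"
    unfolding m_Suc R gg_def gam_rr by (simp add: algebra_simps)
  also have "\<dots> = uu k - gam k *\<^sub>R (Sig *v uu k + lam *\<^sub>R uu k - aa)"
    using Suc[THEN conjunct2] by simp
  finally have U: "uu (Suc k) = uu k - gam k *\<^sub>R (Sig *v uu k + lam *\<^sub>R uu k - aa)" .
  have "uu (Suc k) = h (Suc k)" unfolding U h_Suc using Suc by (simp add: algebra_simps)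
  moreover have "Sig *v uu (Suc k) + lam *\<^sub>R uu (Suc k) - aa = Rm (Suc k) *\<^sub>R gg (Suc k)"
  proof -
    have "Sig *v uu (Suc k) + lam *\<^sub>R uu (Suc k) - aa
        = (Sig *v uu k + lam *\<^sub>R uu k - aa) - gam k *\<^sub>R (Sig *v (Sig *v uu k + lam *\<^sub>R uu k - aa)) - (lam * gam k) *\<^sub>R (Sig *v uu k + lam *\<^sub>R uu k - aa)"
      unfolding U by (rule lin_step)
    also have "\<dots> = Rm k *\<^sub>R (gg k - gam k *\<^sub>R (Sig *v gg k) - (lam * gam k) *\<^sub>R gg k)"
      unfolding Suc[THEN conjunct2] by (simp add: algebra_simps)
    also have "\<dots> = Rm (Suc k) *\<^sub>R gg (Suc k)"
    proof -
      have e1: "rr k *\<^sub>R gg k = gg k - (lam * gam k) *\<^sub>R gg k"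
        by (simp add: rr_gam algebra_simps)
      have e2: "rr k *\<^sub>R (eta k *\<^sub>R (Sig *v gg k)) = gam k *\<^sub>R (Sig *v gg k)"
        by (simp add: gam_rr)
      have "rr k *\<^sub>R gg (Suc k) = gg k - gam k *\<^sub>R (Sig *v gg k) - (lam * gam k) *\<^sub>R gg k"
        unfolding gg_Suc scaleR_diff_right e1 e2 by (simp add: algebra_simps)
      then show ?thesis unfolding R by (metis scaleR_scaleR)
    qed
    finally show ?thesis .
  qed
  ultimately show ?case ..
qed

lemma contrS: "0 \<le> t \<Longrightarrow> t * \<beta> \<le> 1 \<Longrightarrow> norm (v - t *\<^sub>R (Sig *v v)) \<le> (1 - t * \<alpha>) * norm v"
  by (rule contr[OF eig])

lemma contr_k: "norm (v - eta k *\<^sub>R (Sig *v v)) \<le> (1 - eta k * \<alpha>) * norm v"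
  using etak_pos[of k] etak_beta[of k] by (intro contrS) auto

definition "q0 = max 0 (1 - \<eta> * \<alpha>)"

lemma q0_ge: "1 - eta k * \<alpha> \<le> q0"
  unfolding q0_def using eta_bnd alpha_pos by (smt (verit, best) mult_right_mono)

lemma q0_nn: "q0 \<ge> 0" unfolding q0_def by simp
lemma q0_lt1: "q0 < 1" unfolding q0_def using eta_pos alpha_pos by simp

lemma contr_q: "norm (v - eta k *\<^sub>R (Sig *v v)) \<le> q0 * norm v"
  using contr_k[of v k] q0_ge[of k] by (meson mult_right_mono norm_ge_zero order_trans)

definition "wst = matrix_inv Sig *v aa"
definition "hst = matrix_inv (Sig + lam *\<^sub>R mat 1) *v aa"

lemma ridge_mult: "(Sig + lam *\<^sub>R mat 1) *v v = Sig *v v + lam *\<^sub>R v"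
  by (simp add: matrix_vector_mult_add_rdistrib scaleR_matrix_vector_assoc[symmetric])

lemma wst_eq: "Sig *v wst = aa"
  unfolding wst_def
proof (rule inv_apply)
  fix v assume "Sig *v v = 0"
  then have "Sig *v v = 0 *\<^sub>R v" by simp
  then show "v = 0" using eig_lb[OF eig, of v 0] alpha_pos by (cases "v = 0") auto
qed

lemma hst_eq: "Sig *v hst + lam *\<^sub>R hst = aa"
  unfolding hst_def ridge_mult[symmetric]
proof (rule inv_apply)
  fix v assume "(Sig + lam *\<^sub>R mat 1) *v v = 0"
  then have "Sig *v v = (- lam) *\<^sub>R v" unfolding ridge_mult by (simp add: eq_neg_iff_add_eq_0)
  then show "v = 0" using eig_lb[OF eig, of v "- lam"] alpha_pos lam_pos by (cases "v = 0") auto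
qed

lemma m_err: "norm (m k - wst) \<le> q0 ^ k * norm wst"
proof (induct k)
  case 0 then show ?case by (simp add: m0)
next
  case (Suc k)
  have eq: "m (Suc k) - wst = (m k - wst) - eta k *\<^sub>R (Sig *v (m k - wst))"
    unfolding m_Suc using wst_eq by (simp add: algebra_simps matrix_vector_mult_diff_distrib)
  have "norm (m (Suc k) - wst) \<le> q0 * norm (m k - wst)" unfolding eq by (rule contr_q)
  also have "\<dots> \<le> q0 * (q0 ^ k * norm wst)" using Suc q0_nn by (intro mult_left_mono) auto
  finally show ?case by simp
qed

lemma rr_pos: "rr k > 0" unfolding rr_def using den_pos[of k] by simp
lemma rr_le1: "rr k \<le> 1" unfolding rr_def using den_pos[of k] etak_pos[of k] lam_pos by simp

lemma aa_eq: "aa = Sig *v hst + lam *\<^sub>R hst" using hst_eq by simp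

lemma h_err: "norm (h k - hst) \<le> q0 ^ k * norm hst"
proof (induct k)
  case 0 then show ?case by (simp add: h0)
next
  case (Suc k)
  have "h (Suc k) - hst = rr k *\<^sub>R ((h k - hst) - eta k *\<^sub>R (Sig *v (h k - hst)))"
  proof -
    have "h (Suc k) - hst = (h k - hst) - gam k *\<^sub>R (Sig *v (h k - hst)) - (gam k * lam) *\<^sub>R (h k - hst)"
      unfolding h_Suc aa_eq by (simp add: algebra_simps matrix_vector_mult_diff_distrib)
    also have "\<dots> = rr k *\<^sub>R ((h k - hst) - eta k *\<^sub>R (Sig *v (h k - hst)))"
    proof -
      have gl: "gam k * lam = 1 - rr k" using rr_gam[of k] by simp
      show ?thesis unfolding gl by (simp add: gam_rr algebra_simps)
    qed
    finally show ?thesis .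
  qed
  then have "norm (h (Suc k) - hst) = rr k * norm ((h k - hst) - eta k *\<^sub>R (Sig *v (h k - hst)))"
    using rr_pos[of k] by simp
  also have "\<dots> \<le> 1 * (q0 * norm (h k - hst))"
    using rr_pos[of k] rr_le1[of k] contr_q q0_nn by (intro mult_mono) auto
  also have "\<dots> \<le> q0 * (q0 ^ k * norm hst)" using Suc q0_nn by (simp add: mult_left_mono)
  finally show ?case by simp
qed

lemma q0_pow: "(\<lambda>k. q0 ^ k * c) \<longlonglongrightarrow> 0"
  using q0_nn q0_lt1 by (intro tendsto_mult_left_zero LIMSEQ_power_zero) simp

lemma m_lim: "m \<longlonglongrightarrow> wst"
proof -
  have "(\<lambda>k. m k - wst) \<longlonglongrightarrow> 0"
    by (rule Lim_null_comparison[OF always_eventually q0_pow]) (use m_err in auto)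
  then have "(\<lambda>k. (m k - wst) + wst) \<longlonglongrightarrow> 0 + wst" by (intro tendsto_add) auto
  then show ?thesis by simp
qed

lemma h_lim: "h \<longlonglongrightarrow> hst"
proof -
  have "(\<lambda>k. h k - hst) \<longlonglongrightarrow> 0"
    by (rule Lim_null_comparison[OF always_eventually q0_pow]) (use h_err in auto)
  then have "(\<lambda>k. (h k - hst) + hst) \<longlonglongrightarrow> 0 + hst" by (intro tendsto_add) auto
  then show ?thesis by simp
qed

lemma m_bnd: "norm (m k) \<le> 2 * norm wst"
proof -
  have "norm (m k - wst) \<le> norm wst"
    using m_err[of k] q0_nn q0_lt1 by (smt (verit) mult_left_le_one_le norm_ge_zero power_le_one zero_le_power)
  then show ?thesis using norm_triangle_ineq2[of "m k" wst] by linarith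
qed

lemma h_bnd: "norm (h k) \<le> 2 * norm hst"
proof -
  have "norm (h k - hst) \<le> norm hst"
    using h_err[of k] q0_nn q0_lt1 by (smt (verit) mult_left_le_one_le norm_ge_zero power_le_one zero_le_power)
  then show ?thesis using norm_triangle_ineq2[of "h k" hst] by linarith
qed

definition "gm = \<eta> / (1 + lam * \<eta>)"
definition "rho = 1 - lam * gm"

lemma den0_pos: "1 + lam * \<eta> > 0" using eta_pos lam_pos by (simp add: add_pos_pos)

lemma rho_eq: "rho = 1 / (1 + lam * \<eta>)"
  unfolding rho_def gm_def using den0_pos by (simp add: field_simps)

lemma rho_pos: "rho > 0" unfolding rho_eq using den0_pos by simp
lemma rho_lt1: "rho < 1" unfolding rho_eq using den0_pos eta_pos lam_pos by simp

lemma rr_le_rho: "rr k \<le> rho"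
  unfolding rho_eq rr_def using eta_bnd den0_pos den_pos[of k] lam_pos
  by (intro divide_left_mono) (auto intro: mult_left_mono)

lemma Rm_pos: "Rm k > 0" unfolding Rm_def using rr_pos by (simp add: prod_pos)

lemma Rm_le: "Rm k \<le> rho ^ k"
proof -
  have "Rm k \<le> (\<Prod>i<k. rho)" unfolding Rm_def
    using rr_pos rr_le_rho by (intro prod_mono) (auto intro: less_imp_le)
  then show ?thesis by simp
qed

lemma Rm_Suc_le: "Rm (Suc k) \<le> rr 0"
proof -
  have "Rm (Suc k) = rr 0 * (\<Prod>i<k. rr (Suc i))" unfolding Rm_def by (rule prod.lessThan_Suc_shift)
  also have "\<dots> \<le> rr 0 * 1"
    using rr_pos rr_le1 rr_pos[of 0] by (intro mult_left_mono prod_le_1) (auto intro: less_imp_le)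
  finally show ?thesis by simp
qed

lemma P_pos: "1 - Rm (Suc k) \<ge> 1 - rr 0" "1 - rr 0 > 0"
  using Rm_Suc_le[of k] rr_le_rho[of 0] rho_lt1 by auto

lemma sum_wp_m: "(\<Sum>i\<le>k. wp gam eta i *\<^sub>R m i) = h k - Rm (Suc k) *\<^sub>R m k"
  using uu_h[of k] unfolding uu_def by (simp add: algebra_simps)

definition "Cst = 2 * (norm wst + norm hst) / (1 - rr 0)"

lemma D_bound: "norm (h k - (1 / wP gam eta k) *\<^sub>R (\<Sum>i\<le>k. wp gam eta i *\<^sub>R m i)) \<le> Cst * rho ^ k"
proof -
  define R where "R = Rm (Suc k)"
  have P: "wP gam eta k = 1 - R" unfolding R_def wP_eq ..
  have Pp: "1 - R > 0" "1 - R \<ge> 1 - rr 0" using P_pos(1)[of k] P_pos(2) unfolding R_def by auto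
  have "h k - (1 / wP gam eta k) *\<^sub>R (\<Sum>i\<le>k. wp gam eta i *\<^sub>R m i) = (R / (1 - R)) *\<^sub>R (m k - h k)"
  proof -
    have c: "1 / (1 - R) = 1 + R / (1 - R)" using Pp by (simp add: field_simps)
    have e1: "(1 / (1 - R)) *\<^sub>R h k = h k + (R / (1 - R)) *\<^sub>R h k"
      by (subst c) (simp add: scaleR_left_distrib)
    have e2: "(1 / (1 - R)) *\<^sub>R (R *\<^sub>R m k) = (R / (1 - R)) *\<^sub>R m k" by simp
    show ?thesis unfolding sum_wp_m P R_def[symmetric] scaleR_diff_right e1 e2
      by (simp add: algebra_simps)
  qed
  then have "norm (h k - (1 / wP gam eta k) *\<^sub>R (\<Sum>i\<le>k. wp gam eta i *\<^sub>R m i)) = (R / (1 - R)) * norm (m k - h k)"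
    using Pp Rm_pos[of "Suc k"] unfolding R_def by simp
  also have "\<dots> \<le> (rho ^ k / (1 - rr 0)) * (2 * (norm wst + norm hst))"
  proof (intro mult_mono frac_le)
    show "R \<le> rho ^ k" unfolding R_def using Rm_le[of "Suc k"] rho_pos rho_lt1
      by (smt (verit) mult_left_le_one_le power_Suc zero_le_power)
    show "norm (m k - h k) \<le> 2 * (norm wst + norm hst)"
      using m_bnd[of k] h_bnd[of k] norm_triangle_ineq4[of "m k" "h k"] by (simp add: algebra_simps)
  qed (use Pp Rm_pos[of "Suc k"] rho_pos R_def P_pos(2) in auto)
  finally show ?thesis unfolding Cst_def by (simp add: field_simps)
qed

lemma alpha_le_beta: "\<alpha> \<le> \<beta>"
proof (cases "eigenvalues Sig = {}")
  case True
  obtain v :: "real^'d" where v: "v \<noteq> 0" using zero_neq_one by (metis vector_eq_ldot zero_neq_one)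
  have "norm (Sig *v v) \<le> (-1) * norm v"
  proof (rule sym_op_bound)
    show "linear ((*v) Sig)" by simp
    show "inner (Sig *v u) w = inner u (Sig *v w)" for u w by (rule Sig_sym)
    show "\<bar>\<mu>\<bar> \<le> -1" if "z \<noteq> 0" "Sig *v z = \<mu> *\<^sub>R z" for \<mu> z
      using True that unfolding eigenvalues_def by blast
  qed
  then show ?thesis using v by (smt (verit) norm_ge_zero zero_less_norm_iff)
next
  case False
  then obtain \<mu> where "\<mu> \<in> eigenvalues Sig" by blast
  then show ?thesis using eig by force
qed

definition "cc k = 1 - eta k * \<alpha>"

lemma cc_pos: "cc k > 0"
proof -
  have "eta k * \<alpha> \<le> eta k * \<beta>" using alpha_le_beta etak_pos[of k] by simp
  then show ?thesis unfolding cc_def using etak_beta[of k] by linarith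
qed

lemma cc_le1: "cc k \<le> 1" unfolding cc_def using etak_pos[of k] alpha_pos by simp

definition "ee j s = (Sig *v W s j - aa) - (outer (x (s (Suc j))) (x (s (Suc j))) *v W s j - y (s (Suc j)) *\<^sub>R x (s (Suc j)))"

lemma dep_ee: "dep (Suc j) (ee j)"
  unfolding dep_def
proof (intro allI impI)
  fix s t :: "nat \<Rightarrow> nat" assume st: "\<forall>i\<in>{1..Suc j}. s i = t i"
  then have "W s j = W t j" using dep_W[of j] unfolding dep_def by auto
  moreover have "s (Suc j) = t (Suc j)" using st by auto
  ultimately show "ee j s = ee j t" unfolding ee_def by simp
qed

lemma avg_ee: "(1 / real n) *\<^sub>R (\<Sum>l<n. ee j (s(Suc j := l))) = 0"
proof -
  have "ee j (s(Suc j := l)) = (Sig *v W s j - aa) - (outer (x l) (x l) *v W s j - y l *\<^sub>R x l)" for l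
    unfolding ee_def using dep_upd[OF dep_W[of j]] by simp
  then show ?thesis using avg_step[of "Sig *v W s j - aa" 1] avg_grad by simp
qed

definition "dl i s = W s i - m i"

lemma W0: "W s 0 = 0" unfolding W_def by simp

lemma W_Suc: "W s (Suc i) = W s i - eta i *\<^sub>R (Sig *v W s i - aa) + eta i *\<^sub>R ee i s"
  unfolding ee_def by (simp add: W_def Let_def algebra_simps)

lemma dl_Suc: "dl (Suc i) s = (dl i s - eta i *\<^sub>R (Sig *v dl i s)) + eta i *\<^sub>R ee i s"
  unfolding dl_def W_Suc m_Suc by (simp add: algebra_simps matrix_vector_mult_diff_distrib)

fun Phi :: "nat \<Rightarrow> nat \<Rightarrow> real^'d \<Rightarrow> real^'d" where
  "Phi l 0 v = v"
| "Phi l (Suc d) v = Phi l d v - eta (l + d) *\<^sub>R (Sig *v Phi l d v)"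

lemma Phi_lin: "linear (Phi l d)"
proof (induct d)
  case 0 then show ?case by (simp add: linear_id[unfolded id_def])
next
  case (Suc d)
  show ?case
  proof (rule linearI)
    fix u v :: "real^'d" and c :: real
    show "Phi l (Suc d) (u + v) = Phi l (Suc d) u + Phi l (Suc d) v"
      using Suc by (simp add: linear_add algebra_simps)
    show "Phi l (Suc d) (c *\<^sub>R u) = c *\<^sub>R Phi l (Suc d) u"
      using Suc by (simp add: linear_scale algebra_simps)
  qed
qed

lemma Phi_bnd: "norm (Phi l d v) \<le> (\<Prod>q<d. cc (l + q)) * norm v"
proof (induct d)
  case 0 then show ?case by simp
next
  case (Suc d)
  have "norm (Phi l (Suc d) v) \<le> cc (l + d) * norm (Phi l d v)"
    unfolding cc_def by (simp add: contr_k)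
  also have "\<dots> \<le> cc (l + d) * ((\<Prod>q<d. cc (l + q)) * norm v)"
    using Suc cc_pos[of "l + d"] by (intro mult_left_mono) auto
  finally show ?case by (simp add: mult_ac)
qed

lemma Phi_Suc_apply: "Phi l (Suc d) v = (\<lambda>u. u - eta (l + d) *\<^sub>R (Sig *v u)) (Phi l d v)"
  by simp

lemma dl_repr: "dl i s = (\<Sum>j<i. Phi (Suc j) (i - Suc j) (eta j *\<^sub>R ee j s))"
proof (induct i)
  case 0 then show ?case by (simp add: dl_def W0 m0)
next
  case (Suc i)
  have lin: "linear (\<lambda>u. u - eta i *\<^sub>R (Sig *v u))"
    by (rule linearI) (simp_all add: algebra_simps)
  have "dl (Suc i) s = (\<Sum>j<i. (\<lambda>u. u - eta i *\<^sub>R (Sig *v u)) (Phi (Suc j) (i - Suc j) (eta j *\<^sub>R ee j s))) + eta i *\<^sub>R ee i s"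
    unfolding dl_Suc Suc linear_sum[OF lin, symmetric] ..
  also have "\<dots> = (\<Sum>j<i. Phi (Suc j) (Suc i - Suc j) (eta j *\<^sub>R ee j s)) + Phi (Suc i) (Suc i - Suc i) (eta i *\<^sub>R ee i s)"
  proof -
    have "(\<lambda>u. u - eta i *\<^sub>R (Sig *v u)) (Phi (Suc j) (i - Suc j) v) = Phi (Suc j) (Suc i - Suc j) v" if "j < i" for j v
    proof -
      have e: "Suc i - Suc j = Suc (i - Suc j)" "Suc j + (i - Suc j) = i" using that by auto
      show ?thesis unfolding e(1) Phi_Suc_apply e(2) ..
    qed
    then show ?thesis by simp
  qed
  also have "\<dots> = (\<Sum>j<Suc i. Phi (Suc j) (Suc i - Suc j) (eta j *\<^sub>R ee j s))" by simp
  finally show ?case .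
qed

definition "LL k j v = (\<Sum>d<k - j. wp gam eta (Suc j + d) *\<^sub>R Phi (Suc j) d v)"
definition "ZZ k s = (\<Sum>i\<le>k. wp gam eta i *\<^sub>R dl i s)"

lemma sum_shift: "(\<Sum>i\<in>{Suc j..k}. F i) = (\<Sum>d<k - j. F (Suc j + d))"
  by (rule sum.reindex_bij_witness[where i="\<lambda>d. Suc j + d" and j="\<lambda>i. i - Suc j"]) auto

lemma LL_lin: "linear (LL k j)"
  by (rule linearI) (simp_all add: LL_def linear_add[OF Phi_lin] linear_scale[OF Phi_lin]
      scaleR_add_right sum.distrib scaleR_sum_right mult.commute)

lemma ZZ_repr: "ZZ k s = (\<Sum>j<k. LL k j (eta j *\<^sub>R ee j s))"
proof -
  have "ZZ k s = (\<Sum>i\<le>k. \<Sum>j<i. wp gam eta i *\<^sub>R Phi (Suc j) (i - Suc j) (eta j *\<^sub>R ee j s))"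
    unfolding ZZ_def dl_repr by (simp add: scaleR_sum_right)
  also have "\<dots> = (\<Sum>j<k. \<Sum>i\<in>{Suc j..k}. wp gam eta i *\<^sub>R Phi (Suc j) (i - Suc j) (eta j *\<^sub>R ee j s))"
    by (rule sum.nested_swap')
  also have "\<dots> = (\<Sum>j<k. LL k j (eta j *\<^sub>R ee j s))"
    unfolding sum_shift LL_def by simp
  finally show ?thesis .
qed

lemma tele: "(\<Sum>d<(N::nat). (1 - f d) * (\<Prod>q<d. f q)) = 1 - (\<Prod>q<N. (f q :: real))"
  by (induct N) (simp_all add: algebra_simps)

lemma Rm_add: "Rm (l + d) = Rm l * (\<Prod>q<d. rr (l + q))"
proof (induct d)
  case 0 then show ?case by simp
next
  case (Suc d) then show ?case by (simp add: Rm_def mult_ac)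
qed

lemma rrcc: "rr k * cc k = 1 - gam k * (lam + \<alpha>)"
  unfolding cc_def using rr_gam[of k] gam_rr[of k] by (simp add: algebra_simps)

lemma gam_pos: "gam k > 0" unfolding gam_rr using rr_pos etak_pos by simp

lemma wp_nn: "wp gam eta i \<ge> 0" unfolding wp_eq using lam_pos gam_pos Rm_pos
  by (simp add: less_imp_le)

lemma LL_bnd: "norm (LL k j v) \<le> lam / (lam + \<alpha>) * Rm (Suc j) * norm v"
proof -
  define l where "l = Suc j"
  define f where "f q = rr (l + q) * cc (l + q)" for q
  have f_nn: "f q \<ge> 0" for q unfolding f_def using rr_pos cc_pos by (simp add: less_imp_le)
  have "norm (LL k j v) \<le> (\<Sum>d<k - j. wp gam eta (l + d) * ((\<Prod>q<d. cc (l + q)) * norm v))"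
    unfolding LL_def l_def
    by (rule order_trans[OF norm_sum sum_mono]) (auto simp del: add_Suc simp: wp_nn intro!: mult_left_mono Phi_bnd)
  also have "\<dots> = lam / (lam + \<alpha>) * Rm l * norm v * (\<Sum>d<k - j. (1 - f d) * (\<Prod>q<d. f q))"
  proof -
    have "wp gam eta (l + d) * ((\<Prod>q<d. cc (l + q)) * norm v) = lam / (lam + \<alpha>) * Rm l * norm v * ((1 - f d) * (\<Prod>q<d. f q))" for d
    proof -
      have A: "1 - f d = gam (l + d) * (lam + \<alpha>)" unfolding f_def rrcc by simp
      have B: "(\<Prod>q<d. f q) = (\<Prod>q<d. rr (l + q)) * (\<Prod>q<d. cc (l + q))"
        unfolding f_def by (simp add: prod.distrib)
      have C: "lam + \<alpha> > 0" using alpha_pos lam_pos by simp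
      show ?thesis unfolding wp_eq Rm_add A B using C
        by (simp add: field_simps)
    qed
    then show ?thesis by (simp add: sum_distrib_left)
  qed
  also have "\<dots> \<le> lam / (lam + \<alpha>) * Rm l * norm v * 1"
  proof (rule mult_left_mono)
    show "(\<Sum>d<k - j. (1 - f d) * (\<Prod>q<d. f q)) \<le> 1"
      unfolding tele using f_nn by (simp add: prod_nonneg)
    show "0 \<le> lam / (lam + \<alpha>) * Rm l * norm v"
      using lam_pos alpha_pos Rm_pos[of l] by simp
  qed
  finally show ?thesis unfolding l_def by simp
qed

definition "VV k j s = LL k j (eta j *\<^sub>R ee j s)"

lemma dep_VV: "dep (Suc j) (VV k j)"
  using dep_ee[of j] unfolding dep_def VV_def by metis

lemma avg_VV: "(1 / real n) *\<^sub>R (\<Sum>l<n. VV k j (s(Suc j := l))) = 0"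
proof -
  have "(1 / real n) *\<^sub>R (\<Sum>l<n. VV k j (s(Suc j := l))) = LL k j (eta j *\<^sub>R ((1 / real n) *\<^sub>R (\<Sum>l<n. ee j (s(Suc j := l)))))"
    unfolding VV_def by (simp add: linear_sum[OF LL_lin] linear_scale[OF LL_lin] scaleR_sum_right)
  also have "\<dots> = 0" unfolding avg_ee by (simp add: linear_0[OF LL_lin])
  finally show ?thesis .
qed

lemma orth: assumes "j < j'" "j' < k"
  shows "EE k (\<lambda>s. inner (VV k j s) (VV k j' s)) = 0"
proof -
  let ?f = "\<lambda>s. inner (VV k j s) (VV k j' s)"
  have d: "dep (Suc j') ?f"
  proof -
    have d1: "dep (Suc j') (VV k j)" using dep_mono[OF dep_VV[where k=k and j=j], of "Suc j'"] assms by simp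
    have d2: "dep (Suc j') (VV k j')" by (rule dep_VV)
    show ?thesis unfolding dep_def
    proof (intro allI impI)
      fix s t :: "nat \<Rightarrow> nat" assume "\<forall>i\<in>{1..Suc j'}. s i = t i"
      then have "VV k j s = VV k j t" "VV k j' s = VV k j' t"
        using d1 d2 unfolding dep_def by blast+
      then show "?f s = ?f t" by simp
    qed
  qed
  have "EE k ?f = EE (Suc j') ?f" using assms by (intro EE_tower[OF d]) auto
  also have "\<dots> = EE j' (\<lambda>s. (1 / real n) *\<^sub>R (\<Sum>l<n. ?f (s(Suc j' := l))))" by (rule EE_step)
  also have "\<dots> = EE j' (\<lambda>s. 0::real)"
  proof -
    have "(1 / real n) *\<^sub>R (\<Sum>l<n. ?f (s(Suc j' := l))) = 0" for s
    proof -
      have dj: "dep j' (VV k j)" using dep_mono[OF dep_VV[where k=k and j=j]] assms by auto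
      have "(\<Sum>l<n. ?f (s(Suc j' := l))) = (\<Sum>l<n. inner (VV k j s) (VV k j' (s(Suc j' := l))))"
        using dep_upd[OF dj] by simp
      also have "\<dots> = inner (VV k j s) (\<Sum>l<n. VV k j' (s(Suc j' := l)))" by (simp add: inner_sum_right)
      finally have "(1 / real n) *\<^sub>R (\<Sum>l<n. ?f (s(Suc j' := l))) = inner (VV k j s) ((1 / real n) *\<^sub>R (\<Sum>l<n. VV k j' (s(Suc j' := l))))"
        by simp
      then show ?thesis unfolding avg_VV by simp
    qed
    then have "(\<lambda>s. (1 / real n) *\<^sub>R (\<Sum>l<n. ?f (s(Suc j' := l)))) = (\<lambda>s. 0)" by (rule ext)
    then show ?thesis by (simp only:)
  qed
  also have "\<dots> = 0" by (rule EE_const)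
  finally show ?thesis .
qed

lemma ZZ_VV: "ZZ k s = (\<Sum>j<k. VV k j s)"
  unfolding ZZ_repr VV_def ..

lemma EE_ZZ2: "EE k (\<lambda>s. (norm (ZZ k s))\<^sup>2) = (\<Sum>j<k. EE k (\<lambda>s. (norm (VV k j s))\<^sup>2))"
proof -
  have "EE k (\<lambda>s. (norm (ZZ k s))\<^sup>2) = EE k (\<lambda>s. \<Sum>j<k. \<Sum>j'<k. inner (VV k j s) (VV k j' s))"
    unfolding ZZ_VV power2_norm_eq_inner inner_sum_left inner_sum_right
    by (rule arg_cong[where f="EE k"], rule ext, rule sum.swap)
  also have "\<dots> = (\<Sum>j<k. \<Sum>j'<k. EE k (\<lambda>s. inner (VV k j s) (VV k j' s)))"
    by (simp add: EE_sum)
  also have "\<dots> = (\<Sum>j<k. EE k (\<lambda>s. inner (VV k j s) (VV k j s)))"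
  proof (rule sum.cong[OF refl])
    fix j assume j: "j \<in> {..<k}"
    have "(\<Sum>j'<k. EE k (\<lambda>s. inner (VV k j s) (VV k j' s))) = (\<Sum>j'\<in>{j}. EE k (\<lambda>s. inner (VV k j s) (VV k j' s)))"
    proof (rule sum.mono_neutral_right)
      show "\<forall>i\<in>{..<k} - {j}. EE k (\<lambda>s. inner (VV k j s) (VV k i s)) = 0"
      proof
        fix i assume i: "i \<in> {..<k} - {j}"
        show "EE k (\<lambda>s. inner (VV k j s) (VV k i s)) = 0"
        proof (cases "j < i")
          case True then show ?thesis using orth[of j i k] i by auto
        next
          case False
          then have "i < j" using i by auto
          then show ?thesis using orth[of i j k] j by (simp add: inner_commute)
        qed
      qed
    qed (use j in auto)
    then show "(\<Sum>j'<k. EE k (\<lambda>s. inner (VV k j s) (VV k j' s))) = EE k (\<lambda>s. inner (VV k j s) (VV k j s))"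
      by simp
  qed
  finally show ?thesis by (simp add: power2_norm_eq_inner)
qed

definition "cj j = lam / (lam + \<alpha>) * Rm (Suc j) * eta j"

lemma VV_bnd: "(norm (VV k j s))\<^sup>2 \<le> (cj j)\<^sup>2 * (norm (ee j s))\<^sup>2"
proof -
  have "norm (VV k j s) \<le> cj j * norm (ee j s)"
    unfolding VV_def cj_def using LL_bnd[of k j "eta j *\<^sub>R ee j s"] etak_pos[of j]
    by (simp add: mult_ac)
  then have "(norm (VV k j s))\<^sup>2 \<le> (cj j * norm (ee j s))\<^sup>2" by (intro power_mono) auto
  then show ?thesis by (simp add: power_mult_distrib)
qed

lemma EE_ZZ2_bnd:
  assumes hyp: "\<And>j. EE (Suc j) (\<lambda>s. (norm (ee j s))\<^sup>2) \<le> \<sigma>\<^sup>2"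
  shows "EE k (\<lambda>s. (norm (ZZ k s))\<^sup>2) \<le> \<sigma>\<^sup>2 * (\<Sum>j<k. (cj j)\<^sup>2)"
proof -
  have "EE k (\<lambda>s. (norm (VV k j s))\<^sup>2) \<le> (cj j)\<^sup>2 * \<sigma>\<^sup>2" if j: "j < k" for j
  proof -
    have "EE k (\<lambda>s. (norm (VV k j s))\<^sup>2) \<le> EE k (\<lambda>s. (cj j)\<^sup>2 * (norm (ee j s))\<^sup>2)"
      by (rule EE_mono) (rule VV_bnd)
    also have "\<dots> = (cj j)\<^sup>2 * EE k (\<lambda>s. (norm (ee j s))\<^sup>2)"
      using EE_scale[of k "(cj j)\<^sup>2" "\<lambda>s. (norm (ee j s))\<^sup>2"] by simp
    also have "EE k (\<lambda>s. (norm (ee j s))\<^sup>2) = EE (Suc j) (\<lambda>s. (norm (ee j s))\<^sup>2)"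
    proof (rule EE_tower)
      show "dep (Suc j) (\<lambda>s. (norm (ee j s))\<^sup>2)" using dep_ee[of j] unfolding dep_def by metis
    qed (use j in auto)
    also have "(cj j)\<^sup>2 * \<dots> \<le> (cj j)\<^sup>2 * \<sigma>\<^sup>2" using hyp by (intro mult_left_mono) auto
    finally show ?thesis .
  qed
  then have "(\<Sum>j<k. EE k (\<lambda>s. (norm (VV k j s))\<^sup>2)) \<le> (\<Sum>j<k. (cj j)\<^sup>2 * \<sigma>\<^sup>2)"
    by (intro sum_mono) auto
  then show ?thesis unfolding EE_ZZ2 by (simp add: sum_distrib_left sum_distrib_right mult_ac)
qed

lemma gam_le: "gam k \<le> 1 / (lam + \<beta>)"
proof -
  have "eta k * (lam + \<beta>) \<le> 1 + lam * eta k" using etak_beta[of k] by (simp add: algebra_simps)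
  then show ?thesis unfolding gam_def using den_pos[of k] beta_pos lam_pos
    by (simp add: field_simps)
qed

definition "AA = lam / ((lam + \<alpha>) * (lam + \<beta>))"

lemma cj_eq: "cj j = lam / (lam + \<alpha>) * gam j * Rm j"
  unfolding cj_def Rm_def gam_rr by (simp add: mult_ac)

lemma cj_bnd: "(cj j)\<^sup>2 \<le> AA\<^sup>2 * (rho\<^sup>2) ^ j"
proof -
  have l: "lam / (lam + \<alpha>) \<ge> 0" using lam_pos alpha_pos by simp
  have "cj j \<le> lam / (lam + \<alpha>) * (1 / (lam + \<beta>)) * rho ^ j"
    unfolding cj_eq using gam_le[of j] Rm_le[of j] gam_pos[of j] Rm_pos[of j] l beta_pos lam_pos alpha_pos
    by (intro mult_mono) (auto intro!: divide_nonneg_nonneg mult_nonneg_nonneg)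
  moreover have "cj j \<ge> 0" unfolding cj_eq using gam_pos[of j] Rm_pos[of j] l lam_pos alpha_pos
    by (intro mult_nonneg_nonneg) (auto simp: less_imp_le)
  ultimately have "(cj j)\<^sup>2 \<le> (lam / (lam + \<alpha>) * (1 / (lam + \<beta>)) * rho ^ j)\<^sup>2"
    by (intro power_mono) auto
  also have "\<dots> = AA\<^sup>2 * (rho\<^sup>2) ^ j" unfolding AA_def
    by (simp add: power_mult_distrib power_divide power_mult[symmetric] mult.commute[of 2])
  finally show ?thesis .
qed

lemma sum_cj: "(\<Sum>j<k. (cj j)\<^sup>2) \<le> AA\<^sup>2 / (1 - rho\<^sup>2)"
proof -
  have r: "rho\<^sup>2 < 1" "rho\<^sup>2 \<ge> 0" using rho_pos rho_lt1 by (auto simp: power_less_one_iff abs_less_iff)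
  have "(\<Sum>j<k. (cj j)\<^sup>2) \<le> (\<Sum>j<k. AA\<^sup>2 * (rho\<^sup>2) ^ j)" by (intro sum_mono cj_bnd)
  also have "\<dots> = AA\<^sup>2 * ((1 - (rho\<^sup>2) ^ k) / (1 - rho\<^sup>2))"
    using r by (simp add: sum_distrib_left[symmetric] sum_gp_strict)
  also have "\<dots> \<le> AA\<^sup>2 * (1 / (1 - rho\<^sup>2))"
    using r by (intro mult_left_mono divide_right_mono) auto
  finally show ?thesis by simp
qed

lemma gm_pos: "gm > 0" unfolding gm_def using eta_pos den0_pos by simp

lemma gm_beta: "gm * (lam + \<beta>) < 1"
proof -
  have "\<eta> * \<beta> \<le> eta 0 * \<beta>" using eta_bnd beta_pos by (simp add: mult_right_mono)
  then have "\<eta> * \<beta> < 1" using etak_beta[of 0] by linarith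
  then have "\<eta> * (lam + \<beta>) < 1 + lam * \<eta>" by (simp add: algebra_simps)
  then show ?thesis unfolding gm_def using den0_pos by (simp add: field_simps)
qed

lemma lgm: "lam * gm < 1" "lam * gm > 0"
proof -
  have "gm * \<beta> > 0" using gm_pos beta_pos by simp
  then show "lam * gm < 1" using gm_beta by (simp add: algebra_simps)
  show "lam * gm > 0" using gm_pos lam_pos by simp
qed

definition "thr \<sigma> \<delta> = \<sigma> / (gm * (lam + \<alpha>) * (lam + \<beta>)\<^sup>2) * sqrt (lam / (\<delta> * gm * (2 - lam * gm)))"

lemma thr_nn: "\<sigma> \<ge> 0 \<Longrightarrow> \<delta> > 0 \<Longrightarrow> thr \<sigma> \<delta> \<ge> 0"
  unfolding thr_def using gm_pos lam_pos alpha_pos lgm by (intro mult_nonneg_nonneg divide_nonneg_nonneg) auto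

lemma H1: fixes s D l d g Y :: real
  assumes "d > 0" "g > 0" "Y > 0" "D > 0"
  shows "(s / D)\<^sup>2 * (l / (d * g * Y)) * d = (s\<^sup>2 * l / (g * Y)) * (1 / D)\<^sup>2"
  using assms by (simp add: power_divide field_simps)

lemma H2: fixes s l A B g Y :: real
  assumes "l > 0" "g > 0" "Y > 0" "A > 0" "B > 0"
  shows "s\<^sup>2 * ((l / (A * B))\<^sup>2 / (l * g * Y)) = (s\<^sup>2 * l / (g * Y)) * (1 / (A * B))\<^sup>2"
  using assms by (simp add: power_divide field_simps power2_eq_square)

lemma const_cmp:
  assumes "\<delta> > 0"
  shows "\<sigma>\<^sup>2 * (AA\<^sup>2 / (1 - rho\<^sup>2)) \<le> (thr \<sigma> \<delta>)\<^sup>2 * \<delta>"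
proof -
  define X where "X = lam * gm"
  have X: "0 < X" "X < 1" using lgm unfolding X_def by auto
  have g: "gm > 0" by (rule gm_pos)
  have la: "lam + \<alpha> > 0" "lam + \<beta> > 0" using lam_pos alpha_pos beta_pos by auto
  define D where "D = gm * (lam + \<alpha>) * (lam + \<beta>)\<^sup>2"
  have Dp: "D > 0" unfolding D_def using g la by simp
  have arg: "lam / (\<delta> * gm * (2 - X)) \<ge> 0" using assms g lam_pos X by simp
  have rho2: "1 - rho\<^sup>2 = lam * gm * (2 - X)" unfolding rho_def X_def by (simp add: power2_eq_square algebra_simps)
  define Q where "Q = \<sigma>\<^sup>2 * lam / (gm * (2 - X))"
  have Qn: "Q \<ge> 0" unfolding Q_def using g X lam_pos by simp
  have th: "thr \<sigma> \<delta> = \<sigma> / D * sqrt (lam / (\<delta> * gm * (2 - X)))"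
    unfolding thr_def D_def X_def ..
  have T: "(thr \<sigma> \<delta>)\<^sup>2 * \<delta> = Q * (1 / D)\<^sup>2"
  proof -
    have "(thr \<sigma> \<delta>)\<^sup>2 = (\<sigma> / D)\<^sup>2 * (lam / (\<delta> * gm * (2 - X)))"
      unfolding th power_mult_distrib real_sqrt_pow2[OF arg] ..
    then show ?thesis unfolding Q_def using H1[of \<delta> gm "2 - X" D \<sigma> lam] assms g X Dp by simp
  qed
  have L: "\<sigma>\<^sup>2 * (AA\<^sup>2 / (1 - rho\<^sup>2)) = Q * (1 / ((lam + \<alpha>) * (lam + \<beta>)))\<^sup>2"
    unfolding rho2 AA_def Q_def using H2[of lam gm "2 - X" "lam + \<alpha>" "lam + \<beta>" \<sigma>] lam_pos g X la
    by simp
  have "D \<le> (lam + \<alpha>) * (lam + \<beta>)"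
  proof -
    have "D = (gm * (lam + \<beta>)) * ((lam + \<alpha>) * (lam + \<beta>))" unfolding D_def by (simp add: power2_eq_square mult_ac)
    also have "\<dots> \<le> 1 * ((lam + \<alpha>) * (lam + \<beta>))" using gm_beta la by (intro mult_right_mono) auto
    finally show ?thesis by simp
  qed
  then have "1 / ((lam + \<alpha>) * (lam + \<beta>)) \<le> 1 / D" using Dp la by (intro divide_left_mono) auto
  then have "(1 / ((lam + \<alpha>) * (lam + \<beta>)))\<^sup>2 \<le> (1 / D)\<^sup>2" using la by (intro power_mono) auto
  then show ?thesis unfolding L T using Qn by (rule mult_left_mono)
qed

lemma cheb:
  fixes Z :: "(nat \<Rightarrow> nat) \<Rightarrow> real^'d"
  assumes E: "EE k (\<lambda>s. (norm (Z s))\<^sup>2) \<le> t\<^sup>2 * \<delta>" and t: "t \<ge> 0" and d: "\<delta> > 0"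
  shows "EE k (\<lambda>s. if norm (Z s) \<le> t then 1 else 0 :: real) \<ge> 1 - \<delta>"
proof (cases "t = 0")
  case False
  then have tp: "t > 0" using t by simp
  have "EE k (\<lambda>s. 1 - (norm (Z s))\<^sup>2 / t\<^sup>2) \<le> EE k (\<lambda>s. if norm (Z s) \<le> t then 1 else 0 :: real)"
  proof (rule EE_mono)
    fix s
    show "1 - (norm (Z s))\<^sup>2 / t\<^sup>2 \<le> (if norm (Z s) \<le> t then 1 else 0)"
    proof (cases "norm (Z s) \<le> t")
      case True then show ?thesis using tp by simp
    next
      case False
      then have "t\<^sup>2 \<le> (norm (Z s))\<^sup>2" using tp by (intro power_mono) auto
      then have "1 \<le> (norm (Z s))\<^sup>2 / t\<^sup>2" using tp by simp
      then show ?thesis using False by simp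
    qed
  qed
  moreover have "EE k (\<lambda>s. 1 - (norm (Z s))\<^sup>2 / t\<^sup>2) = 1 - EE k (\<lambda>s. (norm (Z s))\<^sup>2) / t\<^sup>2"
    using EE_diff[of k "\<lambda>s. 1" "\<lambda>s. (norm (Z s))\<^sup>2 / t\<^sup>2"] EE_scale[of k "1 / t\<^sup>2" "\<lambda>s. (norm (Z s))\<^sup>2"]
    by (simp add: EE_const)
  moreover have "EE k (\<lambda>s. (norm (Z s))\<^sup>2) / t\<^sup>2 \<le> \<delta>" using E tp by (simp add: field_simps)
  ultimately show ?thesis by linarith
next
  case True
  have "EE k (\<lambda>s. (norm (Z s))\<^sup>2) \<le> 0" using E True by simp
  then have pr: "(1 / real n) ^ k * (\<Sum>s\<in>SS k. (norm (Z s))\<^sup>2) \<le> 0" unfolding EE_def by simp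
  have pk: "(1 / real n) ^ k > 0" using n_pos by simp
  have "(\<Sum>s\<in>SS k. (norm (Z s))\<^sup>2) \<le> 0"
  proof (rule ccontr)
    assume "\<not> ?thesis"
    then have "(1 / real n) ^ k * (\<Sum>s\<in>SS k. (norm (Z s))\<^sup>2) > 0" using pk by simp
    then show False using pr by simp
  qed
  then have z: "\<forall>s\<in>SS k. (norm (Z s))\<^sup>2 = 0"
    using sum_nonneg_eq_0_iff[OF finite_SS[of k], where f="\<lambda>s. (norm (Z s))\<^sup>2"] by (simp add: sum_nonneg antisym)
  have "EE k (\<lambda>s. 1 :: real) \<le> EE k (\<lambda>s. if norm (Z s) \<le> t then 1 else 0 :: real)"
    by (rule EE_mono) (use z True in auto)
  then show ?thesis using d by (simp add: EE_const)
qed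

lemma gam_fun: "(\<lambda>k. eta k / (1 + lam * eta k)) = gam"
  by (rule ext) (simp add: gam_def)

lemma int_w: "integral\<^sup>L M (sgd_w x y eta \<xi> k) = m k"
  unfolding w_eq m_def using EE_int[OF dep_W[of k]] by simp

lemma int_hw: "integral\<^sup>L M (sgd_ridge x y lam gam \<xi> k) = h k"
  unfolding hw_eq h_def using EE_int[OF dep_HW[of k]] by simp

lemma P_ne: "wP gam eta k \<noteq> 0"
  unfolding wP_eq using P_pos(1)[of k] P_pos(2) by simp

definition "TW k s = (1 / wP gam eta k) *\<^sub>R (\<Sum>i\<le>k. wp gam eta i *\<^sub>R W s i)"

lemma dep_W_le: "i \<le> k \<Longrightarrow> dep k (\<lambda>s. W s i)"
  using dep_mono[OF dep_W] .

lemma dep_TW: "dep k (TW k)"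
  unfolding dep_def
proof (intro allI impI)
  fix s t :: "nat \<Rightarrow> nat" assume st: "\<forall>i\<in>{1..k}. s i = t i"
  have "W s i = W t i" if "i \<le> k" for i
    using dep_W_le[OF that] st unfolding dep_def by blast
  then show "TW k s = TW k t" unfolding TW_def by simp
qed

lemma tw_eq: "avg_w gam eta (sgd_w x y eta \<xi>) k \<omega> = TW k (Xi \<omega>)"
  unfolding avg_w_def TW_def w_eq ..

lemma int_tw: "integral\<^sup>L M (avg_w gam eta (sgd_w x y eta \<xi>) k) = (1 / wP gam eta k) *\<^sub>R (\<Sum>i\<le>k. wp gam eta i *\<^sub>R m i)"
proof -
  have "integral\<^sup>L M (avg_w gam eta (sgd_w x y eta \<xi>) k) = EE k (TW k)"
    unfolding tw_eq using EE_int[OF dep_TW[of k]] by simp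
  also have "\<dots> = (1 / wP gam eta k) *\<^sub>R EE k (\<lambda>s. \<Sum>i\<le>k. wp gam eta i *\<^sub>R W s i)"
    unfolding TW_def by (rule EE_scale)
  also have "EE k (\<lambda>s. \<Sum>i\<le>k. wp gam eta i *\<^sub>R W s i) = (\<Sum>i\<le>k. EE k (\<lambda>s. wp gam eta i *\<^sub>R W s i))"
    by (rule EE_sum)
  also have "\<dots> = (\<Sum>i\<le>k. wp gam eta i *\<^sub>R m i)"
  proof (rule sum.cong[OF refl])
    fix i assume "i \<in> {..k}"
    then have "EE k (\<lambda>s. W s i) = m i" unfolding m_def by (intro EE_tower[OF dep_W]) simp
    then show "EE k (\<lambda>s. wp gam eta i *\<^sub>R W s i) = wp gam eta i *\<^sub>R m i" by (simp only: EE_scale)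
  qed
  finally show ?thesis .
qed

lemma part1: "wP gam eta k *\<^sub>R integral\<^sup>L M (avg_w gam eta (sgd_w x y eta \<xi>) k)
   = integral\<^sup>L M (sgd_ridge x y lam gam \<xi> k) - (1 - wP gam eta k) *\<^sub>R integral\<^sup>L M (sgd_w x y eta \<xi> k)"
  unfolding int_tw int_hw int_w using P_ne[of k] by (simp add: sum_wp_m wP_eq)

lemma part2c: "norm (integral\<^sup>L M (sgd_ridge x y lam gam \<xi> k) - integral\<^sup>L M (avg_w gam eta (sgd_w x y eta \<xi>) k)) \<le> Cst * (1 - lam * gm) ^ k"
  unfolding int_tw int_hw rho_def[symmetric] by (rule D_bound)

lemma dep_ZZ: "dep k (ZZ k)"
  unfolding dep_def
proof (intro allI impI)
  fix s t :: "nat \<Rightarrow> nat" assume st: "\<forall>i\<in>{1..k}. s i = t i"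
  have "W s i = W t i" if "i \<le> k" for i
    using dep_W_le[OF that] st unfolding dep_def by blast
  then show "ZZ k s = ZZ k t" unfolding ZZ_def dl_def by simp
qed

lemma zz_eq: "wP gam eta k *\<^sub>R avg_w gam eta (sgd_w x y eta \<xi>) k \<omega>
      - wP gam eta k *\<^sub>R integral\<^sup>L M (avg_w gam eta (sgd_w x y eta \<xi>) k) = ZZ k (Xi \<omega>)"
  unfolding int_tw tw_eq TW_def ZZ_def dl_def using P_ne[of k]
  by (simp add: sum_subtractf scaleR_diff_right)

lemma hyp_eq: "integral\<^sup>L M (\<lambda>\<omega>. (norm ((Sig *v sgd_w x y eta \<xi> k \<omega> - aa)
                 - (outer (x (\<xi> (Suc k) \<omega>)) (x (\<xi> (Suc k) \<omega>)) *v sgd_w x y eta \<xi> k \<omega>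
                    - y (\<xi> (Suc k) \<omega>) *\<^sub>R x (\<xi> (Suc k) \<omega>))))\<^sup>2)
     = EE (Suc k) (\<lambda>s. (norm (ee k s))\<^sup>2)"
proof -
  have d: "dep (Suc k) (\<lambda>s. (norm (ee k s))\<^sup>2)" using dep_ee[of k] unfolding dep_def by metis
  have "(\<lambda>\<omega>. (norm ((Sig *v sgd_w x y eta \<xi> k \<omega> - aa)
                 - (outer (x (\<xi> (Suc k) \<omega>)) (x (\<xi> (Suc k) \<omega>)) *v sgd_w x y eta \<xi> k \<omega>
                    - y (\<xi> (Suc k) \<omega>) *\<^sub>R x (\<xi> (Suc k) \<omega>))))\<^sup>2) = (\<lambda>\<omega>. (norm (ee k (Xi \<omega>)))\<^sup>2)"
    unfolding ee_def w_eq by (simp add: Xi_def)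
  then show ?thesis using EE_int[OF d] by simp
qed

lemma part3:
  assumes s0: "\<sigma> \<ge> 0"
    and hyp: "\<forall>k. integral\<^sup>L M (\<lambda>\<omega>. (norm ((Sig *v sgd_w x y eta \<xi> k \<omega> - aa)
                 - (outer (x (\<xi> (Suc k) \<omega>)) (x (\<xi> (Suc k) \<omega>)) *v sgd_w x y eta \<xi> k \<omega>
                    - y (\<xi> (Suc k) \<omega>) *\<^sub>R x (\<xi> (Suc k) \<omega>))))\<^sup>2) \<le> \<sigma>\<^sup>2"
    and d: "0 < \<delta>"
  shows "measure M {\<omega> \<in> space M.
                    norm (wP gam eta k *\<^sub>R avg_w gam eta (sgd_w x y eta \<xi>) k \<omega>
                      - wP gam eta k *\<^sub>R integral\<^sup>L M (avg_w gam eta (sgd_w x y eta \<xi>) k))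
                    \<le> thr \<sigma> \<delta>} \<ge> 1 - \<delta>"
proof -
  have h: "EE (Suc j) (\<lambda>s. (norm (ee j s))\<^sup>2) \<le> \<sigma>\<^sup>2" for j using hyp hyp_eq by simp
  have "EE k (\<lambda>s. (norm (ZZ k s))\<^sup>2) \<le> \<sigma>\<^sup>2 * (\<Sum>j<k. (cj j)\<^sup>2)" by (rule EE_ZZ2_bnd[OF h])
  also have "\<dots> \<le> \<sigma>\<^sup>2 * (AA\<^sup>2 / (1 - rho\<^sup>2))" using sum_cj by (intro mult_left_mono) auto
  also have "\<dots> \<le> (thr \<sigma> \<delta>)\<^sup>2 * \<delta>" by (rule const_cmp[OF d])
  finally have E: "EE k (\<lambda>s. (norm (ZZ k s))\<^sup>2) \<le> (thr \<sigma> \<delta>)\<^sup>2 * \<delta>" .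
  have dq: "dep k (\<lambda>s. norm (ZZ k s) \<le> thr \<sigma> \<delta>)" using dep_ZZ[of k] unfolding dep_def by metis
  have "measure M {\<omega> \<in> space M. norm (wP gam eta k *\<^sub>R avg_w gam eta (sgd_w x y eta \<xi>) k \<omega>
                      - wP gam eta k *\<^sub>R integral\<^sup>L M (avg_w gam eta (sgd_w x y eta \<xi>) k)) \<le> thr \<sigma> \<delta>}
     = measure M {\<omega> \<in> space M. norm (ZZ k (Xi \<omega>)) \<le> thr \<sigma> \<delta>}"
    unfolding zz_eq ..
  also have "\<dots> = EE k (\<lambda>s. if norm (ZZ k s) \<le> thr \<sigma> \<delta> then 1 else 0)"
    by (rule EE_measure[OF dq])
  finally show ?thesis using cheb[OF E thr_nn[OF s0 d] d] by simp
qed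

end

theorem theorem1:
  fixes x :: "nat \<Rightarrow> real^'d" and y :: "nat \<Rightarrow> real" and n :: nat
    and M :: "'a measure" and \<xi> :: "nat \<Rightarrow> 'a \<Rightarrow> nat"
    and \<alpha> \<beta> lam \<eta> \<sigma> :: real and eta :: "nat \<Rightarrow> real"
  assumes n_pos: "n > 0"
    and prob: "prob_space M"
    and indep: "prob_space.indep_vars M (\<lambda>_. count_space UNIV) \<xi> {1..}"
    and unif: "\<forall>k\<ge>1. \<forall>i<n. measure M {\<omega> \<in> space M. \<xi> k \<omega> = i} = 1 / real n"
    and alpha_pos: "0 < \<alpha>"
    and eig: "\<forall>\<mu>\<in>eigenvalues (data_Sigma x n). \<alpha> \<le> \<mu> \<and> \<mu> \<le> \<beta>"
    and lam_pos: "lam > 0"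
    and eta_pos: "\<eta> > 0"
    and eta_bnd: "\<forall>k. \<eta> \<le> eta k \<and> eta k < 1 / \<beta>"
  shows
    "let Sig = data_Sigma x n; a = data_a x y n;
         gam = (\<lambda>k. eta k / (1 + lam * eta k));
         \<gamma> = \<eta> / (1 + lam * \<eta>);
         w = sgd_w x y eta \<xi>;
         hw = sgd_ridge x y lam gam \<xi>;
         tw = avg_w gam eta w;
         P = wP gam eta
     in (\<forall>k. P k *\<^sub>R integral\<^sup>L M (tw k) = integral\<^sup>L M (hw k) - (1 - P k) *\<^sub>R integral\<^sup>L M (w k))
      \<and> ((\<lambda>k. integral\<^sup>L M (w k)) \<longlonglongrightarrow> matrix_inv Sig *v a)
      \<and> ((\<lambda>k. integral\<^sup>L M (hw k)) \<longlonglongrightarrow> matrix_inv (Sig + lam *\<^sub>R mat 1) *v a)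
      \<and> (\<exists>C. \<forall>k. norm (integral\<^sup>L M (hw k) - integral\<^sup>L M (tw k)) \<le> C * (1 - lam * \<gamma>) ^ k)
      \<and> ((\<sigma> \<ge> 0 \<and>
          (\<forall>k. integral\<^sup>L M (\<lambda>\<omega>. (norm ((Sig *v w k \<omega> - a)
                 - (outer (x (\<xi> (Suc k) \<omega>)) (x (\<xi> (Suc k) \<omega>)) *v w k \<omega>
                    - y (\<xi> (Suc k) \<omega>) *\<^sub>R x (\<xi> (Suc k) \<omega>))))\<^sup>2) \<le> \<sigma>\<^sup>2))
         \<longrightarrow> (\<forall>\<delta>. 0 < \<delta> \<and> \<delta> < 1 \<longrightarrow>
               (\<forall>\<^sub>F k in sequentially.
                  measure M {\<omega> \<in> space M.
                    norm (P k *\<^sub>R tw k \<omega> - P k *\<^sub>R integral\<^sup>L M (tw k))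
                    \<le> \<sigma> / (\<gamma> * (lam + \<alpha>) * (lam + \<beta>)\<^sup>2)
                        * sqrt (lam / (\<delta> * \<gamma> * (2 - lam * \<gamma>)))}
                  \<ge> 1 - \<delta>)))"
proof -
  interpret S: main M \<xi> n x y \<alpha> \<beta> lam \<eta> eta
  proof (intro main.intro sgdm.intro sgdm_axioms.intro main_axioms.intro prob)
    show "prob_space.indep_vars M (\<lambda>_. count_space UNIV) \<xi> {1..}" by (rule indep)
    show "\<forall>k\<ge>1. \<forall>i<n. measure M {\<omega> \<in> space M. \<xi> k \<omega> = i} = 1 / real n" by (rule unif)
  qed (use n_pos alpha_pos eig lam_pos eta_pos eta_bnd in auto)
  have g: "\<eta> / (1 + lam * \<eta>) = S.gm" unfolding S.gm_def ..
  show ?thesis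
    unfolding Let_def S.gam_fun g
  proof (intro conjI allI impI)
    fix k show "wP S.gam eta k *\<^sub>R integral\<^sup>L M (avg_w S.gam eta (sgd_w x y eta \<xi>) k) =
      integral\<^sup>L M (sgd_ridge x y lam S.gam \<xi> k) - (1 - wP S.gam eta k) *\<^sub>R integral\<^sup>L M (sgd_w x y eta \<xi> k)"
      by (rule S.part1)
  next
    show "(\<lambda>k. integral\<^sup>L M (sgd_w x y eta \<xi> k)) \<longlonglongrightarrow> matrix_inv (data_Sigma x n) *v data_a x y n"
      unfolding S.int_w S.wst_def[symmetric] by (rule S.m_lim)
  next
    show "(\<lambda>k. integral\<^sup>L M (sgd_ridge x y lam S.gam \<xi> k)) \<longlonglongrightarrow> matrix_inv (data_Sigma x n + lam *\<^sub>R mat 1) *v data_a x y n"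
      unfolding S.int_hw S.hst_def[symmetric] by (rule S.h_lim)
  next
    show "\<exists>C. \<forall>k. norm (integral\<^sup>L M (sgd_ridge x y lam S.gam \<xi> k) - integral\<^sup>L M (avg_w S.gam eta (sgd_w x y eta \<xi>) k)) \<le> C * (1 - lam * S.gm) ^ k"
      using S.part2c by blast
  next
    fix \<delta> :: real
    assume hs: "0 \<le> \<sigma> \<and> (\<forall>k. integral\<^sup>L M (\<lambda>\<omega>. (norm ((data_Sigma x n *v sgd_w x y eta \<xi> k \<omega> - data_a x y n)
                 - (outer (x (\<xi> (Suc k) \<omega>)) (x (\<xi> (Suc k) \<omega>)) *v sgd_w x y eta \<xi> k \<omega>
                    - y (\<xi> (Suc k) \<omega>) *\<^sub>R x (\<xi> (Suc k) \<omega>))))\<^sup>2) \<le> \<sigma>\<^sup>2)"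
      and hd: "0 < \<delta> \<and> \<delta> < 1"
    show "\<forall>\<^sub>F k in sequentially.
                  measure M {\<omega> \<in> space M.
                    norm (wP S.gam eta k *\<^sub>R avg_w S.gam eta (sgd_w x y eta \<xi>) k \<omega> - wP S.gam eta k *\<^sub>R integral\<^sup>L M (avg_w S.gam eta (sgd_w x y eta \<xi>) k))
                    \<le> \<sigma> / (S.gm * (lam + \<alpha>) * (lam + \<beta>)\<^sup>2)
                        * sqrt (lam / (\<delta> * S.gm * (2 - lam * S.gm)))}
                  \<ge> 1 - \<delta>"
      using S.part3[of \<sigma> \<delta>] hs hd unfolding S.thr_def by (intro always_eventually) auto
  qed
qed

end
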